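(* Let $(R,\mathfrak m,k)$ be a Noetherian local ring of dimension $d$, $j\ge2$, and $M$ a finitely generated $R$-module with $\operatorname{pd}_RM=1$. If $M$ satisfies the $(SW_j)$ condition and $\beta_1^R(M)\ge d$, then $\beta_t^R(\mathcal S_j(M))\ge\binom{d}{t}$ for all $t=0,1,\dots,\operatorname{pd}_R\mathcal S_j(M)$.
   Context: $\beta_i^R(N)$ is the $i$-th Betti number (rank of the $i$-th module in a minimal free resolution of $N$). $\mathcal S_j(M)$ is the $j$-th graded component of the symmetric algebra $\mathcal S_R(M)$. For a free module $F$ of finite rank, $D_a(F)$ is the $a$-th divided power and $\Lambda^aF$ the $a$-th exterior power. For a minimal free resolution $\mathbf F_\bullet:0\to F_1\xrightarrow{\phi_1}F_0$ of $M$ (i.e. $\operatorname{Im}\phi_1\subseteq\mathfrak mF_0$), the complex $\mathcal S_j\mathbf F_\bullet$ is $0\to D_{j-l}F_0\otimes\Lambda^lF_1\to\cdots\to D_{j-1}F_0\otimes\Lambda^1F_1\to D_jF_0$, $l=\min\{\operatorname{rank}F_1,j\}$, with $(\mathcal S_j\mathbf F_\bullet)_t=D_{j-t}F_0\otimes\Lambda^tF_1$ and differential (up to sign) $f_1^{(c_1)}\cdots f_r^{(c_r)}\otimes(e_{1}\wedge\cdots\wedge e_{t})\mapsto\sum_s(-1)^s f_1^{(c_1)}\cdots f_r^{(c_r)}\cup\phi_1(e_{s})\otimes e_1\wedge\cdots\widehat{e_s}\cdots\wedge e_t$, where $\cup$ multiplies a divided power monomial by a basis element $f_m$ by raising the exponent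 of $f_m$ by one (extended linearly). $M$ satisfies the $(SW_j)$ condition if $\mathcal S_j\mathbf F_\bullet$ is a finite free resolution of $\mathcal S_j(M)$. Standing assumption: the characteristic of $R$ is such that this construction is a complex (e.g. small integers invertible in $R$). *)

theory Defs
  imports "HOL-Algebra.Ring_Divisibility" "HOL-Algebra.Module" "HOL-Algebra.Ideal"
    "HOL-Library.Multiset" "HOL-Library.Extended_Nat"
begin

definition local_ring :: "'a ring \<Rightarrow> bool" where
  "local_ring R \<longleftrightarrow> cring R \<and> noetherian_ring R \<and> (\<exists>!I. maximalideal I R)"

definition max_ideal :: "'a ring \<Rightarrow> 'a set" where
  "max_ideal R = (THE I. maximalideal I R)"

definition krull_dim :: "'a ring \<Rightarrow> enat" where
  "krull_dim R = Sup {enat n | n. \<exists>P. (\<forall>i\<le>n. primeideal (P i) R) \<and> (\<forall>i<n. P i \<subset> P (Suc i))}"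

definition span :: "'a ring \<Rightarrow> ('a, 'b) module \<Rightarrow> 'b set \<Rightarrow> 'b set" where
  "span R M S = \<Inter>{K. submodule K R M \<and> S \<subseteq> K}"

definition fin_gen :: "'a ring \<Rightarrow> ('a, 'b) module \<Rightarrow> bool" where
  "fin_gen R M \<longleftrightarrow> (\<exists>S. finite S \<and> S \<subseteq> carrier M \<and> span R M S = carrier M)"

definition lin_map :: "'a ring \<Rightarrow> ('a, 'b) module \<Rightarrow> ('a, 'c) module \<Rightarrow> ('b \<Rightarrow> 'c) \<Rightarrow> bool" where
  "lin_map R M N f \<longleftrightarrow> f \<in> carrier M \<rightarrow> carrier N
     \<and> (\<forall>x\<in>carrier M. \<forall>y\<in>carrier M. f (x \<oplus>\<^bsub>M\<^esub> y) = f x \<oplus>\<^bsub>N\<^esub> f y)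
     \<and> (\<forall>r\<in>carrier R. \<forall>x\<in>carrier M. f (r \<odot>\<^bsub>M\<^esub> x) = r \<odot>\<^bsub>N\<^esub> f x)"

definition lin_ker :: "('a, 'b) module \<Rightarrow> ('a, 'c) module \<Rightarrow> ('b \<Rightarrow> 'c) \<Rightarrow> 'b set" where
  "lin_ker M N f = {x \<in> carrier M. f x = \<zero>\<^bsub>N\<^esub>}"

definition free_on :: "'a ring \<Rightarrow> 'c set \<Rightarrow> ('a, 'c \<Rightarrow> 'a) module" where
  "free_on R B = \<lparr> carrier = {v. (\<forall>x\<in>B. v x \<in> carrier R) \<and> (\<forall>x. x \<notin> B \<longrightarrow> v x = \<zero>\<^bsub>R\<^esub>)
                                  \<and> finite {x. v x \<noteq> \<zero>\<^bsub>R\<^esub>}},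
                   monoid.mult = (\<lambda>v w. undefined), one = undefined,
                   zero = (\<lambda>x. \<zero>\<^bsub>R\<^esub>),
                   add = (\<lambda>v w x. v x \<oplus>\<^bsub>R\<^esub> w x),
                   smult = (\<lambda>r v x. r \<otimes>\<^bsub>R\<^esub> v x) \<rparr>"

definition quot_mod :: "'a ring \<Rightarrow> ('a, 'b) module \<Rightarrow> 'b set \<Rightarrow> ('a, 'b set) module" where
  "quot_mod R M K = \<lparr> carrier = (\<lambda>x. (\<lambda>k. x \<oplus>\<^bsub>M\<^esub> k) ` K) ` carrier M,
                   monoid.mult = (\<lambda>C D. undefined), one = undefined,
                   zero = K,
                   add = (\<lambda>C D. {c \<oplus>\<^bsub>M\<^esub> e | c e. c \<in> C \<and> e \<in> D}),
                   smult = (\<lambda>r C. {r \<odot>\<^bsub>M\<^esub> c \<oplus>\<^bsub>M\<^esub> k | c k. c \<in> C \<and> k \<in> K}) \<rparr>"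

definition is_resolution :: "'a ring \<Rightarrow> ('a, 'b) module \<Rightarrow> (nat \<Rightarrow> ('a, 'c) module)
     \<Rightarrow> (nat \<Rightarrow> 'c \<Rightarrow> 'c) \<Rightarrow> ('c \<Rightarrow> 'b) \<Rightarrow> bool" where
  "is_resolution R N F d eps \<longleftrightarrow> module R N \<and> (\<forall>i. module R (F i))
     \<and> (\<forall>i. lin_map R (F (Suc i)) (F i) (d (Suc i)))
     \<and> lin_map R (F 0) N eps \<and> eps ` carrier (F 0) = carrier N
     \<and> lin_ker (F 0) N eps = d 1 ` carrier (F 1)
     \<and> (\<forall>i\<ge>1. lin_ker (F i) (F (i - 1)) (d i) = d (Suc i) ` carrier (F (Suc i)))"

definition minimal_complex :: "'a ring \<Rightarrow> (nat \<Rightarrow> ('a, 'c) module) \<Rightarrow> (nat \<Rightarrow> 'c \<Rightarrow> 'c) \<Rightarrow> bool" where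
  "minimal_complex R F d \<longleftrightarrow> (\<forall>i. d (Suc i) ` carrier (F (Suc i))
      \<subseteq> span R (F i) {r \<odot>\<^bsub>F i\<^esub> x | r x. r \<in> max_ideal R \<and> x \<in> carrier (F i)})"

definition min_free_res :: "'a ring \<Rightarrow> ('a, 'b) module \<Rightarrow> (nat \<Rightarrow> nat)
     \<Rightarrow> (nat \<Rightarrow> (nat \<Rightarrow> 'a) \<Rightarrow> (nat \<Rightarrow> 'a)) \<Rightarrow> ((nat \<Rightarrow> 'a) \<Rightarrow> 'b) \<Rightarrow> bool" where
  "min_free_res R N b d eps \<longleftrightarrow> is_resolution R N (\<lambda>i. free_on R {..<b i}) d eps
     \<and> minimal_complex R (\<lambda>i. free_on R {..<b i}) d"

definition betti :: "'a ring \<Rightarrow> ('a, 'b) module \<Rightarrow> nat \<Rightarrow> nat" where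
  "betti R N i = (SOME b. \<exists>d eps. min_free_res R N b d eps) i"

definition proj_dim :: "'a ring \<Rightarrow> ('a, 'b) module \<Rightarrow> enat" where
  "proj_dim R N = Inf {enat p | p. \<exists>(b :: nat \<Rightarrow> nat) d eps.
      is_resolution R N (\<lambda>i. free_on R {..<b i}) d eps \<and> (\<forall>i>p. b i = 0)}"

definition sym_gens :: "('a, 'b) module \<Rightarrow> nat \<Rightarrow> 'b multiset set" where
  "sym_gens M j = {X. size X = j \<and> set_mset X \<subseteq> carrier M}"

definition delta :: "'a ring \<Rightarrow> 'c \<Rightarrow> 'c \<Rightarrow> 'a" where
  "delta R x = (\<lambda>y. if y = x then \<one>\<^bsub>R\<^esub> else \<zero>\<^bsub>R\<^esub>)"

definition sym_free :: "'a ring \<Rightarrow> ('a, 'b) module \<Rightarrow> nat \<Rightarrow> ('a, 'b multiset \<Rightarrow> 'a) module" where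
  "sym_free R M j = free_on R (sym_gens M j)"

text \<open>Multilinearity relations (symmetry is built in by using multisets).\<close>
definition sym_rels :: "'a ring \<Rightarrow> ('a, 'b) module \<Rightarrow> nat \<Rightarrow> ('b multiset \<Rightarrow> 'a) set" where
  "sym_rels R M j =
     {delta R (add_mset (x \<oplus>\<^bsub>M\<^esub> y) X) \<ominus>\<^bsub>sym_free R M j\<^esub> delta R (add_mset x X)
        \<ominus>\<^bsub>sym_free R M j\<^esub> delta R (add_mset y X)
       | x y X. x \<in> carrier M \<and> y \<in> carrier M \<and> X \<in> sym_gens M (j - 1) \<and> 0 < j}
   \<union> {delta R (add_mset (r \<odot>\<^bsub>M\<^esub> x) X) \<ominus>\<^bsub>sym_free R M j\<^esub> (r \<odot>\<^bsub>sym_free R M j\<^esub> delta R (add_mset x X))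
       | r x X. r \<in> carrier R \<and> x \<in> carrier M \<and> X \<in> sym_gens M (j - 1) \<and> 0 < j}"

definition sym_pow :: "'a ring \<Rightarrow> ('a, 'b) module \<Rightarrow> nat \<Rightarrow> ('a, ('b multiset \<Rightarrow> 'a) set) module" where
  "sym_pow R M j = quot_mod R (sym_free R M j) (span R (sym_free R M j) (sym_rels R M j))"

text \<open>Action of the matrix phi (phi i s = coefficient of f_i in phi_1(e_s)).\<close>
definition mat_map :: "'a ring \<Rightarrow> (nat \<Rightarrow> nat \<Rightarrow> 'a) \<Rightarrow> nat \<Rightarrow> nat \<Rightarrow> (nat \<Rightarrow> 'a) \<Rightarrow> (nat \<Rightarrow> 'a)" where
  "mat_map R phi n m v = (\<lambda>i. if i < n then finsum R (\<lambda>s. phi i s \<otimes>\<^bsub>R\<^esub> v s) {..<m} else \<zero>\<^bsub>R\<^esub>)"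

text \<open>Basis of D_{j-t} F0 \<otimes> \<Lambda>^t F1: divided power monomials (multisets over the basis of F0)
  of degree j-t paired with t-subsets of the basis of F1.\<close>
definition SB :: "nat \<Rightarrow> nat \<Rightarrow> nat \<Rightarrow> nat \<Rightarrow> (nat multiset \<times> nat set) set" where
  "SB n m j t = {(c, E). t \<le> j \<and> set_mset c \<subseteq> {..<n} \<and> size c = j - t \<and> E \<subseteq> {..<m} \<and> card E = t}"

definition SF :: "'a ring \<Rightarrow> nat \<Rightarrow> nat \<Rightarrow> nat \<Rightarrow> nat \<Rightarrow> ('a, nat multiset \<times> nat set \<Rightarrow> 'a) module" where
  "SF R n m j t = free_on R (SB n m j t)"

definition wsign :: "'a ring \<Rightarrow> nat set \<Rightarrow> nat \<Rightarrow> 'a" where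
  "wsign R E s = (if even (card {e \<in> E. e < s}) then \<one>\<^bsub>R\<^esub> else \<ominus>\<^bsub>R\<^esub> \<one>\<^bsub>R\<^esub>)"

definition Sd :: "'a ring \<Rightarrow> (nat \<Rightarrow> nat \<Rightarrow> 'a) \<Rightarrow> nat \<Rightarrow> nat \<Rightarrow> nat \<Rightarrow> nat
     \<Rightarrow> (nat multiset \<times> nat set \<Rightarrow> 'a) \<Rightarrow> (nat multiset \<times> nat set \<Rightarrow> 'a)" where
  "Sd R phi n m j t v = (\<lambda>y. finsum R (\<lambda>(c, E). finsum R (\<lambda>s. finsum R (\<lambda>i.
        if (add_mset i c, E - {s}) = y
        then wsign R E s \<otimes>\<^bsub>R\<^esub> phi i s \<otimes>\<^bsub>R\<^esub> v (c, E) else \<zero>\<^bsub>R\<^esub>) {..<n}) E) (SB n m j t))"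

definition SW :: "'a ring \<Rightarrow> ('a, 'b) module \<Rightarrow> nat \<Rightarrow> bool" where
  "SW R M j \<longleftrightarrow> (\<exists>n m phi eps.
      min_free_res R M (\<lambda>i. if i = 0 then n else if i = 1 then m else 0)
        (\<lambda>i. if i = 1 then mat_map R phi n m else (\<lambda>v k. \<zero>\<^bsub>R\<^esub>)) eps
      \<and> (\<forall>i<n. \<forall>s<m. phi i s \<in> carrier R)
      \<and> (\<exists>eps'. is_resolution R (sym_pow R M j) (\<lambda>t. SF R n m j t) (\<lambda>t. Sd R phi n m j t) eps'))"

end

theory Submission
  imports Defs
begin


lemma local_ring_cring: "local_ring R \<Longrightarrow> cring R"
  by (simp add: local_ring_def)

lemma local_max_ideal: "local_ring R \<Longrightarrow> maximalideal (max_ideal R) R"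
  unfolding local_ring_def max_ideal_def by (metis theI')

lemma local_max_ideal_unique: "local_ring R \<Longrightarrow> maximalideal I R \<Longrightarrow> I = max_ideal R"
  unfolding local_ring_def max_ideal_def by (metis the1_equality)

lemma local_nonmax_unit:
  fixes R (structure)
  assumes L: "local_ring R" and a: "a \<in> carrier R" and na: "a \<notin> max_ideal R"
  shows "a \<in> Units R"
proof (rule ccontr)
  assume nu: "a \<notin> Units R"
  interpret cring R using L by (simp add: local_ring_def)
  interpret noetherian_ring R using L by (simp add: local_ring_def)
  let ?J = "PIdl a"
  have J: "ideal ?J R" using cgenideal_ideal[OF a] .
  have one: "\<one> \<notin> ?J"
  proof
    assume "\<one> \<in> ?J"
    then obtain x where "x \<in> carrier R" "\<one> = x \<otimes> a" unfolding cgenideal_def by auto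
    then have "a \<in> Units R" using a m_comm unfolding Units_def by auto
    with nu show False by simp
  qed
  define A where "A = {I. ideal I R \<and> ?J \<subseteq> I \<and> \<one> \<notin> I}"
  have "\<exists>M\<in>A. \<forall>X\<in>A. M \<subseteq> X \<longrightarrow> X = M"
  proof (rule subset_Zorn_nonempty)
    show "A \<noteq> {}" using J one unfolding A_def by auto
    fix C assume C: "C \<noteq> {}" "subset.chain A C"
    have "subset.chain {I. ideal I R} C" using C(2) unfolding A_def pred_on.chain_def by auto
    then have "\<Union>C \<in> C" using ideal_chain_is_trivial C(1) by blast
    then show "\<Union>C \<in> A" using C(2) unfolding pred_on.chain_def by auto
  qed
  then obtain M where M: "M \<in> A" "\<forall>X\<in>A. M \<subseteq> X \<longrightarrow> X = M" by blast
  have "maximalideal M R"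
  proof (rule maximalidealI)
    show "ideal M R" using M unfolding A_def by auto
    show "carrier R \<noteq> M" using M unfolding A_def by auto
    fix K assume K: "ideal K R" "M \<subseteq> K" "K \<subseteq> carrier R"
    show "K = M \<or> K = carrier R"
    proof (cases "\<one> \<in> K")
      case True
      then have "K = carrier R" using ideal.one_imp_carrier[OF K(1)] by simp
      then show ?thesis by simp
    next
      case False
      then have "K \<in> A" using K M unfolding A_def by auto
      then show ?thesis using M K by auto
    qed
  qed
  then have "M = max_ideal R" using local_max_ideal_unique L by blast
  moreover have "a \<in> M" using M cgenideal_self[OF a] unfolding A_def by auto
  ultimately show False using na by simp
qed

lemma ideal_minus:
  "ideal I R \<Longrightarrow> a \<in> I \<Longrightarrow> b \<in> I \<Longrightarrow> a \<ominus>\<^bsub>R\<^esub> b \<in> I"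
  unfolding a_minus_def
  by (simp add: additive_subgroup.a_closed additive_subgroup.a_inv_closed ideal.axioms(1))

lemma ideal_finsum:
  fixes R (structure)
  assumes "ring R" "ideal I R" "finite A" "\<forall>a\<in>A. f a \<in> I"
  shows "finsum R f A \<in> I"
  using assms(3,4)
proof (induction A rule: finite_induct)
  case empty
  interpret ring R by fact
  show ?case using assms(2) by (simp add: additive_subgroup.zero_closed ideal.axioms(1))
next
  case (insert x F)
  have sub: "I \<subseteq> carrier R" using assms(2) by (simp add: additive_subgroup.a_subset ideal.axioms(1))
  interpret ring R by fact
  have "finsum R f (insert x F) = f x \<oplus> finsum R f F"
    using insert sub by (intro finsum_insert) auto
  then show ?case using insert assms(2) by (simp add: additive_subgroup.a_closed ideal.axioms(1))
qed

lemma matrix_card: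
  fixes R (structure)
  assumes L: "local_ring R"
  shows "finite J \<Longrightarrow> finite I \<Longrightarrow> (\<forall>r\<in>I. \<forall>j\<in>J. A r j \<in> carrier R) \<Longrightarrow> (\<forall>i\<in>J. \<forall>r\<in>I. B i r \<in> carrier R)
    \<Longrightarrow> (\<forall>i\<in>J. \<forall>j\<in>J. (\<Oplus>r\<in>I. B i r \<otimes> A r j) \<ominus> (if i = j then \<one> else \<zero>) \<in> max_ideal R)
    \<Longrightarrow> card J \<le> card I"
proof (induction "card J" arbitrary: J I A)
  case 0
  then show ?case by simp
next
  case (Suc nn)
  interpret cring R using L by (simp add: local_ring_def)
  let ?m = "max_ideal R"
  have mx: "maximalideal ?m R" using local_max_ideal[OF L] .
  have mI: "ideal ?m R" using mx by (simp add: maximalideal_def)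
  have msub: "?m \<subseteq> carrier R" using mI by (simp add: additive_subgroup.a_subset ideal.axioms(1))
  have one_n: "\<one> \<notin> ?m"
    using mx ideal.one_imp_carrier[OF mI] maximalideal.I_notcarr by metis
  obtain j0 where j0: "j0 \<in> J" using Suc.hyps(2) by (metis card.empty ex_in_conv nat.simps(3))
  define S where "S i j = (\<Oplus>r\<in>I. B i r \<otimes> A r j)" for i j
  have Sc: "S i j \<in> carrier R" if "i \<in> J" "j \<in> J" for i j
    unfolding S_def using Suc.prems that by (intro finsum_closed) auto
  have S00: "S j0 j0 \<notin> ?m"
  proof
    assume a: "S j0 j0 \<in> ?m"
    have b: "S j0 j0 \<ominus> \<one> \<in> ?m" using bspec[OF bspec[OF Suc.prems(5) j0] j0] unfolding S_def by simp
    have "\<one> = S j0 j0 \<ominus> (S j0 j0 \<ominus> \<one>)" using Sc[OF j0 j0] by algebra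
    also have "\<dots> \<in> ?m" using a b mI by (simp add: ideal_minus)
    finally show False using one_n by simp
  qed
  have "\<exists>k\<in>I. B j0 k \<otimes> A k j0 \<notin> ?m"
  proof (rule ccontr)
    assume "\<not> ?thesis"
    then have "S j0 j0 \<in> ?m" unfolding S_def using ideal_finsum[OF ring_axioms mI Suc.prems(2)] by auto
    with S00 show False by simp
  qed
  then obtain k where k: "k \<in> I" "B j0 k \<otimes> A k j0 \<notin> ?m" by blast
  have ak: "A k j0 \<notin> ?m"
    using k Suc.prems(3,4) j0 ideal.I_l_closed[OF mI] by blast
  define a where "a = A k j0"
  have ac: "a \<in> carrier R" using Suc.prems(3) k j0 unfolding a_def by auto
  have au: "a \<in> Units R" using local_nonmax_unit[OF L ac] ak unfolding a_def by simp
  define ai where "ai = inv a"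
  have aic: "ai \<in> carrier R" using au unfolding ai_def by simp
  have aai: "a \<otimes> ai = \<one>" using au unfolding ai_def by simp
  define A' where "A' r j = A r j \<ominus> A r j0 \<otimes> ai \<otimes> A k j" for r j
  let ?I = "I - {k}" and ?J = "J - {j0}"
  have cardJ: "nn = card ?J" using Suc.hyps(2) j0 Suc.prems(1) by simp
  have A'c: "\<forall>r\<in>?I. \<forall>j\<in>?J. A' r j \<in> carrier R"
    unfolding A'_def using Suc.prems(3) k j0 aic by auto
  have key: "\<forall>i\<in>?J. \<forall>j\<in>?J. (\<Oplus>r\<in>?I. B i r \<otimes> A' r j) \<ominus> (if i = j then \<one> else \<zero>) \<in> ?m"
  proof (intro ballI)
    fix i j assume i: "i \<in> ?J" and j: "j \<in> ?J"
    have iJ: "i \<in> J" and jJ: "j \<in> J" and ij0: "i \<noteq> j0" using i j by auto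
    define c where "c = ai \<otimes> A k j"
    have cc: "c \<in> carrier R" using aic Suc.prems(3) k jJ unfolding c_def by auto
    have Bc: "\<And>r. r \<in> I \<Longrightarrow> B i r \<in> carrier R" using Suc.prems(4) iJ by auto
    have Ac: "\<And>r jj. r \<in> I \<Longrightarrow> jj \<in> J \<Longrightarrow> A r jj \<in> carrier R" using Suc.prems(3) by auto
    define X where "X = (\<Oplus>r\<in>?I. B i r \<otimes> A r j)"
    define Y where "Y = (\<Oplus>r\<in>?I. B i r \<otimes> A r j0)"
    have Xc: "X \<in> carrier R" unfolding X_def using Bc Ac jJ by (intro finsum_closed) auto
    have Yc: "Y \<in> carrier R" unfolding Y_def using Bc Ac j0 by (intro finsum_closed) auto
    have T: "(\<Oplus>r\<in>?I. B i r \<otimes> A' r j) = X \<oplus> Y \<otimes> (\<ominus> c)"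
    proof -
      have "(\<Oplus>r\<in>?I. B i r \<otimes> A' r j) = (\<Oplus>r\<in>?I. B i r \<otimes> A r j \<oplus> (B i r \<otimes> A r j0) \<otimes> (\<ominus> c))"
      proof (rule finsum_cong')
        fix r assume r: "r \<in> ?I"
        then have "B i r \<in> carrier R" "A r j \<in> carrier R" "A r j0 \<in> carrier R" using Bc Ac jJ j0 by auto
        then show "B i r \<otimes> A' r j = B i r \<otimes> A r j \<oplus> (B i r \<otimes> A r j0) \<otimes> (\<ominus> c)"
          unfolding A'_def c_def using aic Ac[OF k(1) jJ] by algebra
      next
        show "(\<lambda>r. B i r \<otimes> A r j \<oplus> (B i r \<otimes> A r j0) \<otimes> (\<ominus> c)) \<in> ?I \<rightarrow> carrier R"
          using Bc Ac jJ j0 cc by auto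
      qed simp
      also have "\<dots> = X \<oplus> (\<Oplus>r\<in>?I. (B i r \<otimes> A r j0) \<otimes> (\<ominus> c))"
        unfolding X_def using Bc Ac jJ j0 cc Suc.prems(2) by (subst finsum_addf) auto
      also have "(\<Oplus>r\<in>?I. (B i r \<otimes> A r j0) \<otimes> (\<ominus> c)) = Y \<otimes> (\<ominus> c)"
        unfolding Y_def using Bc Ac j0 cc Suc.prems(2) by (subst finsum_ldistr) auto
      finally show ?thesis .
    qed
    have split: "(\<Oplus>r\<in>I. B i r \<otimes> A r jj) = B i k \<otimes> A k jj \<oplus> (\<Oplus>r\<in>?I. B i r \<otimes> A r jj)"
      if jj: "jj \<in> J" for jj
    proof -
      have "(\<Oplus>r\<in>I. B i r \<otimes> A r jj) = (\<Oplus>r\<in>insert k ?I. B i r \<otimes> A r jj)"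
        by (simp add: insert_absorb[OF k(1)])
      also have "\<dots> = B i k \<otimes> A k jj \<oplus> (\<Oplus>r\<in>?I. B i r \<otimes> A r jj)"
        using Suc.prems(2) Bc Ac jj k by (intro finsum_insert) auto
      finally show ?thesis .
    qed
    have Sij: "S i j = B i k \<otimes> A k j \<oplus> X"
      unfolding S_def X_def using split[OF jJ] .
    have Sij0: "S i j0 = B i k \<otimes> a \<oplus> Y"
      unfolding S_def Y_def a_def using split[OF j0] .
    have Bik: "B i k \<in> carrier R" using Bc k by auto
    have Akj: "A k j \<in> carrier R" using Ac k jJ by auto
    define dl where "dl = (if i = j then \<one> else \<zero>)"
    have dlc: "dl \<in> carrier R" unfolding dl_def by auto
    have e1: "(B i k \<otimes> a \<oplus> Y \<ominus> \<zero>) \<otimes> (\<ominus> c) = \<ominus> (B i k \<otimes> (a \<otimes> ai) \<otimes> A k j) \<oplus> Y \<otimes> (\<ominus> c)"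
      unfolding c_def using Bik ac aic Yc Akj by algebra
    have e2: "X \<oplus> Y \<otimes> (\<ominus> c) \<ominus> dl = (S i j \<ominus> dl) \<oplus> (S i j0 \<ominus> \<zero>) \<otimes> (\<ominus> c)"
      unfolding Sij Sij0 e1 aai using Bik Akj Xc Yc cc dlc by algebra
    have m1: "S i j \<ominus> dl \<in> ?m" using bspec[OF bspec[OF Suc.prems(5) iJ] jJ] unfolding S_def dl_def by simp
    have m2: "S i j0 \<ominus> \<zero> \<in> ?m" using bspec[OF bspec[OF Suc.prems(5) iJ] j0] ij0 unfolding S_def by simp
    have m3: "(S i j0 \<ominus> \<zero>) \<otimes> (\<ominus> c) \<in> ?m" using m2 cc ideal.I_r_closed[OF mI] by auto
    have "(S i j \<ominus> dl) \<oplus> (S i j0 \<ominus> \<zero>) \<otimes> (\<ominus> c) \<in> ?m"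
      using m1 m3 mI by (simp add: additive_subgroup.a_closed ideal.axioms(1))
    then show "(\<Oplus>r\<in>?I. B i r \<otimes> A' r j) \<ominus> (if i = j then \<one> else \<zero>) \<in> ?m"
      using e2 unfolding T dl_def by simp
  qed
  have "card ?J \<le> card ?I"
    using Suc.hyps(1)[OF cardJ, of ?I A'] Suc.prems(1,2,4) A'c key by auto
  then show ?case using k j0 Suc.prems(1,2)
    by (metis Suc.hyps(2) Suc_le_mono card_Diff1_less card_Suc_Diff1 cardJ le_less_trans not_less_eq_eq)
qed



lemma lin_map_closed: "lin_map R M N f \<Longrightarrow> x \<in> carrier M \<Longrightarrow> f x \<in> carrier N"
  unfolding lin_map_def by auto

lemma lin_map_add: "lin_map R M N f \<Longrightarrow> x \<in> carrier M \<Longrightarrow> y \<in> carrier M \<Longrightarrow> f (x \<oplus>\<^bsub>M\<^esub> y) = f x \<oplus>\<^bsub>N\<^esub> f y"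
  unfolding lin_map_def by auto

lemma lin_map_smult: "lin_map R M N f \<Longrightarrow> r \<in> carrier R \<Longrightarrow> x \<in> carrier M \<Longrightarrow> f (r \<odot>\<^bsub>M\<^esub> x) = r \<odot>\<^bsub>N\<^esub> f x"
  unfolding lin_map_def by auto

lemma lin_map_zero:
  assumes "module R M" "module R N" "lin_map R M N f"
  shows "f \<zero>\<^bsub>M\<^esub> = \<zero>\<^bsub>N\<^esub>"
proof -
  interpret M: module R M by fact
  interpret N: module R N by fact
  have "f \<zero>\<^bsub>M\<^esub> = f (\<zero>\<^bsub>R\<^esub> \<odot>\<^bsub>M\<^esub> \<zero>\<^bsub>M\<^esub>)" by simp
  also have "\<dots> = \<zero>\<^bsub>R\<^esub> \<odot>\<^bsub>N\<^esub> f \<zero>\<^bsub>M\<^esub>" by (rule lin_map_smult[OF assms(3)]) simp_all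
  also have "\<dots> = \<zero>\<^bsub>N\<^esub>" using assms(3) lin_map_closed by (simp add: lin_map_closed)
  finally show ?thesis .
qed

lemma lin_map_neg:
  assumes "module R M" "module R N" "lin_map R M N f" "x \<in> carrier M"
  shows "f (\<ominus>\<^bsub>M\<^esub> x) = \<ominus>\<^bsub>N\<^esub> f x"
proof -
  interpret M: module R M by fact
  interpret N: module R N by fact
  have "f (\<ominus>\<^bsub>M\<^esub> x) = f ((\<ominus>\<^bsub>R\<^esub> \<one>\<^bsub>R\<^esub>) \<odot>\<^bsub>M\<^esub> x)" using assms(4) by (simp add: M.smult_l_minus)
  also have "\<dots> = (\<ominus>\<^bsub>R\<^esub> \<one>\<^bsub>R\<^esub>) \<odot>\<^bsub>N\<^esub> f x" by (rule lin_map_smult[OF assms(3)]) (simp_all add: assms(4))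
  also have "\<dots> = \<ominus>\<^bsub>N\<^esub> f x" using assms(3,4) by (simp add: lin_map_closed N.smult_l_minus)
  finally show ?thesis .
qed

lemma lin_map_minus:
  assumes "module R M" "module R N" "lin_map R M N f" "x \<in> carrier M" "y \<in> carrier M"
  shows "f (x \<ominus>\<^bsub>M\<^esub> y) = f x \<ominus>\<^bsub>N\<^esub> f y"
proof -
  interpret M: module R M by fact
  show ?thesis unfolding a_minus_def using assms
    by (simp add: lin_map_add lin_map_neg)
qed

lemma lin_map_finsum:
  assumes "module R M" "module R N" "lin_map R M N f" "finite A" "g \<in> A \<rightarrow> carrier M"
  shows "f (finsum M g A) = finsum N (\<lambda>a. f (g a)) A"
  using assms(4,5)
proof (induction A rule: finite_induct)
  case empty
  interpret M: module R M by fact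
  interpret N: module R N by fact
  show ?case using lin_map_zero[OF assms(1-3)] by simp
next
  case (insert x F)
  interpret M: module R M by fact
  interpret N: module R N by fact
  have c: "\<And>a. a \<in> insert x F \<Longrightarrow> f (g a) \<in> carrier N" by (rule lin_map_closed[OF assms(3)]) (use insert(4) in auto)
  have gc: "g \<in> F \<rightarrow> carrier M" "g x \<in> carrier M" using insert(4) by auto
  have e1: "finsum M g (insert x F) = g x \<oplus>\<^bsub>M\<^esub> finsum M g F"
    by (rule M.finsum_insert) (use insert gc in auto)
  have e2: "finsum N (\<lambda>a. f (g a)) (insert x F) = f (g x) \<oplus>\<^bsub>N\<^esub> finsum N (\<lambda>a. f (g a)) F"
    by (rule N.finsum_insert) (use insert c in auto)
  have e3: "f (g x \<oplus>\<^bsub>M\<^esub> finsum M g F) = f (g x) \<oplus>\<^bsub>N\<^esub> f (finsum M g F)"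
    by (rule lin_map_add[OF assms(3)]) (use gc M.finsum_closed in auto)
  show ?case unfolding e1 e2 e3 using insert(3) gc by simp
qed

lemma lin_map_comp: "lin_map R M N f \<Longrightarrow> lin_map R N P g \<Longrightarrow> lin_map R M P (\<lambda>x. g (f x))"
  unfolding lin_map_def by (auto simp: Pi_def)

lemma lin_map_diff:
  assumes "module R M" "module R N" "lin_map R M N f" "lin_map R M N g"
  shows "lin_map R M N (\<lambda>x. f x \<ominus>\<^bsub>N\<^esub> g x)"
proof -
  interpret M: module R M by fact
  interpret N: module R N by fact
  have fc: "\<And>x. x \<in> carrier M \<Longrightarrow> f x \<in> carrier N" and gc: "\<And>x. x \<in> carrier M \<Longrightarrow> g x \<in> carrier N"
    using lin_map_closed[OF assms(3)] lin_map_closed[OF assms(4)] by auto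
  show ?thesis unfolding lin_map_def
  proof (intro conjI ballI)
    show "(\<lambda>x. f x \<ominus>\<^bsub>N\<^esub> g x) \<in> carrier M \<rightarrow> carrier N" using fc gc by auto
  next
    fix x y assume x: "x \<in> carrier M" and y: "y \<in> carrier M"
    have "f (x \<oplus>\<^bsub>M\<^esub> y) \<ominus>\<^bsub>N\<^esub> g (x \<oplus>\<^bsub>M\<^esub> y) = (f x \<oplus>\<^bsub>N\<^esub> f y) \<ominus>\<^bsub>N\<^esub> (g x \<oplus>\<^bsub>N\<^esub> g y)"
      using assms x y by (simp add: lin_map_add)
    also have "\<dots> = (f x \<ominus>\<^bsub>N\<^esub> g x) \<oplus>\<^bsub>N\<^esub> (f y \<ominus>\<^bsub>N\<^esub> g y)"
      using fc[OF x] fc[OF y] gc[OF x] gc[OF y]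
      by (simp add: a_minus_def N.minus_add N.a_ac)
    finally show "f (x \<oplus>\<^bsub>M\<^esub> y) \<ominus>\<^bsub>N\<^esub> g (x \<oplus>\<^bsub>M\<^esub> y) = (f x \<ominus>\<^bsub>N\<^esub> g x) \<oplus>\<^bsub>N\<^esub> (f y \<ominus>\<^bsub>N\<^esub> g y)" .
  next
    fix r x assume r: "r \<in> carrier R" and x: "x \<in> carrier M"
    have "f (r \<odot>\<^bsub>M\<^esub> x) \<ominus>\<^bsub>N\<^esub> g (r \<odot>\<^bsub>M\<^esub> x) = r \<odot>\<^bsub>N\<^esub> f x \<ominus>\<^bsub>N\<^esub> r \<odot>\<^bsub>N\<^esub> g x"
      using assms r x by (simp add: lin_map_smult)
    also have "\<dots> = r \<odot>\<^bsub>N\<^esub> (f x \<ominus>\<^bsub>N\<^esub> g x)"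
      using fc[OF x] gc[OF x] r by (simp add: a_minus_def N.smult_r_distr N.smult_r_minus)
    finally show "f (r \<odot>\<^bsub>M\<^esub> x) \<ominus>\<^bsub>N\<^esub> g (r \<odot>\<^bsub>M\<^esub> x) = r \<odot>\<^bsub>N\<^esub> (f x \<ominus>\<^bsub>N\<^esub> g x)" .
  qed
qed



lemma free_on_carrier: "v \<in> carrier (free_on R B) \<longleftrightarrow>
   (\<forall>x\<in>B. v x \<in> carrier R) \<and> (\<forall>x. x \<notin> B \<longrightarrow> v x = \<zero>\<^bsub>R\<^esub>) \<and> finite {x. v x \<noteq> \<zero>\<^bsub>R\<^esub>}"
  by (simp add: free_on_def)

lemma free_on_zero: "\<zero>\<^bsub>free_on R B\<^esub> = (\<lambda>x. \<zero>\<^bsub>R\<^esub>)"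
  by (simp add: free_on_def)

lemma free_on_add: "v \<oplus>\<^bsub>free_on R B\<^esub> w = (\<lambda>x. v x \<oplus>\<^bsub>R\<^esub> w x)"
  by (simp add: free_on_def)

lemma free_on_smult: "r \<odot>\<^bsub>free_on R B\<^esub> v = (\<lambda>x. r \<otimes>\<^bsub>R\<^esub> v x)"
  by (simp add: free_on_def)

lemma free_on_val: "ring R \<Longrightarrow> v \<in> carrier (free_on R B) \<Longrightarrow> v a \<in> carrier R"
  unfolding free_on_carrier by (cases "a \<in> B") (auto simp: ring.ring_simprules(2))

lemma free_on_module:
  fixes R (structure)
  assumes "cring R"
  shows "module R (free_on R B)"
proof -
  interpret cring R by fact
  let ?F = "free_on R B"
  have ab: "abelian_group ?F"
  proof (rule abelian_groupI)
    fix x y assume x: "x \<in> carrier ?F" and y: "y \<in> carrier ?F"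
    have "{a. x a \<oplus> y a \<noteq> \<zero>} \<subseteq> {a. x a \<noteq> \<zero>} \<union> {a. y a \<noteq> \<zero>}" by auto
    then show "x \<oplus>\<^bsub>?F\<^esub> y \<in> carrier ?F" using x y
      unfolding free_on_carrier free_on_add by (auto intro: finite_subset)
    show "x \<oplus>\<^bsub>?F\<^esub> y = y \<oplus>\<^bsub>?F\<^esub> x" using free_on_val[OF ring_axioms x] free_on_val[OF ring_axioms y]
      unfolding free_on_add by (auto simp: a_comm)
  next
    show "\<zero>\<^bsub>?F\<^esub> \<in> carrier ?F" unfolding free_on_carrier free_on_zero by simp
  next
    fix x y z assume x: "x \<in> carrier ?F" and y: "y \<in> carrier ?F" and z: "z \<in> carrier ?F"
    show "x \<oplus>\<^bsub>?F\<^esub> y \<oplus>\<^bsub>?F\<^esub> z = x \<oplus>\<^bsub>?F\<^esub> (y \<oplus>\<^bsub>?F\<^esub> z)"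
      using free_on_val[OF ring_axioms x] free_on_val[OF ring_axioms y] free_on_val[OF ring_axioms z]
      unfolding free_on_add by (auto simp: a_assoc)
  next
    fix x assume x: "x \<in> carrier ?F"
    show "\<zero>\<^bsub>?F\<^esub> \<oplus>\<^bsub>?F\<^esub> x = x" using free_on_val[OF ring_axioms x]
      unfolding free_on_add free_on_zero by auto
    let ?y = "\<lambda>a. \<ominus> x a"
    have "{a. \<ominus> x a \<noteq> \<zero>} \<subseteq> {a. x a \<noteq> \<zero>}" using x unfolding free_on_carrier
      by auto
    then have "?y \<in> carrier ?F" using x unfolding free_on_carrier by (auto intro: finite_subset)
    moreover have "?y \<oplus>\<^bsub>?F\<^esub> x = \<zero>\<^bsub>?F\<^esub>" using free_on_val[OF ring_axioms x]
      unfolding free_on_add free_on_zero by (auto simp: l_neg)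
    ultimately show "\<exists>y\<in>carrier ?F. y \<oplus>\<^bsub>?F\<^esub> x = \<zero>\<^bsub>?F\<^esub>" by blast
  qed
  show ?thesis
  proof (rule moduleI[OF assms ab])
    fix a x assume a: "a \<in> carrier R" and x: "x \<in> carrier ?F"
    have "{b. a \<otimes> x b \<noteq> \<zero>} \<subseteq> {b. x b \<noteq> \<zero>}" using x a unfolding free_on_carrier by auto
    then show "a \<odot>\<^bsub>?F\<^esub> x \<in> carrier ?F" using a x unfolding free_on_carrier free_on_smult
      by (auto intro: finite_subset)
  next
    fix a b x assume "a \<in> carrier R" "b \<in> carrier R" and x: "x \<in> carrier ?F"
    then show "(a \<oplus> b) \<odot>\<^bsub>?F\<^esub> x = a \<odot>\<^bsub>?F\<^esub> x \<oplus>\<^bsub>?F\<^esub> b \<odot>\<^bsub>?F\<^esub> x"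
      using free_on_val[OF ring_axioms x] unfolding free_on_smult free_on_add
      by (auto simp: l_distr)
  next
    fix a x y assume "a \<in> carrier R" and x: "x \<in> carrier ?F" and y: "y \<in> carrier ?F"
    then show "a \<odot>\<^bsub>?F\<^esub> (x \<oplus>\<^bsub>?F\<^esub> y) = a \<odot>\<^bsub>?F\<^esub> x \<oplus>\<^bsub>?F\<^esub> a \<odot>\<^bsub>?F\<^esub> y"
      using free_on_val[OF ring_axioms x] free_on_val[OF ring_axioms y] unfolding free_on_smult free_on_add
      by (auto simp: r_distr)
  next
    fix a b x assume "a \<in> carrier R" "b \<in> carrier R" and x: "x \<in> carrier ?F"
    then show "(a \<otimes> b) \<odot>\<^bsub>?F\<^esub> x = a \<odot>\<^bsub>?F\<^esub> (b \<odot>\<^bsub>?F\<^esub> x)"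
      using free_on_val[OF ring_axioms x] unfolding free_on_smult
      by (auto simp: m_assoc)
  next
    fix x assume x: "x \<in> carrier ?F"
    then show "\<one> \<odot>\<^bsub>?F\<^esub> x = x"
      using free_on_val[OF ring_axioms x] unfolding free_on_smult
      by auto
  qed
qed


lemma free_on_neg:
  fixes R (structure)
  assumes "cring R" "v \<in> carrier (free_on R B)"
  shows "\<ominus>\<^bsub>free_on R B\<^esub> v = (\<lambda>x. \<ominus> v x)"
proof -
  interpret cring R by fact
  interpret F: module R "free_on R B" using free_on_module[OF assms(1)] .
  have vv: "\<And>a. v a \<in> carrier R" using free_on_val[OF ring_axioms assms(2)] .
  have "{a. \<ominus> v a \<noteq> \<zero>} \<subseteq> {a. v a \<noteq> \<zero>}" by auto
  then have yc: "(\<lambda>x. \<ominus> v x) \<in> carrier (free_on R B)" using assms(2) unfolding free_on_carrier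
    by (auto intro: finite_subset)
  have "(\<lambda>x. \<ominus> v x) \<oplus>\<^bsub>free_on R B\<^esub> v = \<zero>\<^bsub>free_on R B\<^esub>"
    unfolding free_on_add free_on_zero using vv by (auto simp: l_neg)
  then show ?thesis by (rule F.minus_equality[OF _ assms(2) yc])
qed

lemma free_on_minus:
  fixes R (structure)
  assumes "cring R" "v \<in> carrier (free_on R B)" "w \<in> carrier (free_on R B)"
  shows "v \<ominus>\<^bsub>free_on R B\<^esub> w = (\<lambda>x. v x \<ominus> w x)"
  unfolding a_minus_def free_on_neg[OF assms(1,3)] free_on_add ..

lemma free_on_finsum_apply:
  fixes R (structure)
  assumes "cring R" "finite A" "f \<in> A \<rightarrow> carrier (free_on R B)"
  shows "finsum (free_on R B) f A x = (\<Oplus>a\<in>A. f a x)"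
  using assms(2,3)
proof (induction A rule: finite_induct)
  case empty
  interpret cring R by fact
  interpret F: module R "free_on R B" using free_on_module[OF assms(1)] .
  show ?case by (simp add: free_on_zero)
next
  case (insert y A)
  interpret cring R by fact
  interpret F: module R "free_on R B" using free_on_module[OF assms(1)] .
  have fc: "f \<in> A \<rightarrow> carrier (free_on R B)" "f y \<in> carrier (free_on R B)" using insert(4) by auto
  have "finsum (free_on R B) f (insert y A) = f y \<oplus>\<^bsub>free_on R B\<^esub> finsum (free_on R B) f A"
    by (rule F.finsum_insert) (use insert fc in auto)
  then have "finsum (free_on R B) f (insert y A) x = f y x \<oplus> (\<Oplus>a\<in>A. f a x)"
    using insert(3)[OF fc(1)] by (simp add: free_on_add)
  also have "\<dots> = (\<Oplus>a\<in>insert y A. f a x)"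
  proof -
    have fx: "\<And>a. a \<in> insert y A \<Longrightarrow> f a x \<in> carrier R"
      by (rule free_on_val[OF ring_axioms]) (use insert(4) in auto)
    show ?thesis by (rule finsum_insert[symmetric]) (use fx insert(1,2) in auto)
  qed
  finally show ?case .
qed

lemma delta_carrier:
  "ring R \<Longrightarrow> b \<in> B \<Longrightarrow> delta R b \<in> carrier (free_on R B)"
  unfolding free_on_carrier delta_def
  by (auto simp: ring.ring_simprules(6) ring.ring_simprules(2) intro: finite_subset[of _ "{b}"])

lemma free_on_expand:
  fixes R (structure)
  assumes "cring R" "finite B" "v \<in> carrier (free_on R B)"
  shows "v = finsum (free_on R B) (\<lambda>b. v b \<odot>\<^bsub>free_on R B\<^esub> delta R b) B"
proof -
  interpret cring R by fact
  interpret F: module R "free_on R B" using free_on_module[OF assms(1)] .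
  have vv: "\<And>a. v a \<in> carrier R" using free_on_val[OF ring_axioms assms(3)] .
  have tc: "(\<lambda>b. v b \<odot>\<^bsub>free_on R B\<^esub> delta R b) \<in> B \<rightarrow> carrier (free_on R B)"
    by (auto intro!: F.smult_closed delta_carrier[OF ring_axioms] vv)
  show ?thesis
  proof (rule ext)
    fix x
    have "finsum (free_on R B) (\<lambda>b. v b \<odot>\<^bsub>free_on R B\<^esub> delta R b) B x
        = (\<Oplus>b\<in>B. v b \<otimes> delta R b x)"
      using free_on_finsum_apply[OF assms(1,2) tc] by (simp add: free_on_smult)
    also have "\<dots> = (\<Oplus>b\<in>B. if x = b then v b else \<zero>)"
      by (rule finsum_cong') (auto simp: delta_def vv)
    also have "\<dots> = v x"
    proof (cases "x \<in> B")
      case True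
      then show ?thesis using finsum_singleton[OF True assms(2), of v] vv by auto
    next
      case False
      then have "(\<Oplus>b\<in>B. if x = b then v b else \<zero>) = (\<Oplus>b\<in>B. \<zero>)"
        by (intro finsum_cong') auto
      then show ?thesis using False assms(3) unfolding free_on_carrier by simp
    qed
    finally show "v x = finsum (free_on R B) (\<lambda>b. v b \<odot>\<^bsub>free_on R B\<^esub> delta R b) B x" by simp
  qed
qed

lemma lin_map_free_expand:
  fixes R (structure)
  assumes "cring R" "module R N" "lin_map R (free_on R B) N f" "finite B" "v \<in> carrier (free_on R B)"
  shows "f v = finsum N (\<lambda>b. v b \<odot>\<^bsub>N\<^esub> f (delta R b)) B"
proof -
  interpret cring R by fact
  interpret F: module R "free_on R B" using free_on_module[OF assms(1)] .
  interpret N: module R N by fact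
  have vv: "\<And>a. v a \<in> carrier R" using free_on_val[OF ring_axioms assms(5)] .
  have tc: "(\<lambda>b. v b \<odot>\<^bsub>free_on R B\<^esub> delta R b) \<in> B \<rightarrow> carrier (free_on R B)"
    by (auto intro!: F.smult_closed delta_carrier[OF ring_axioms] vv)
  have "f v = f (finsum (free_on R B) (\<lambda>b. v b \<odot>\<^bsub>free_on R B\<^esub> delta R b) B)"
    using free_on_expand[OF assms(1,4,5)] by simp
  also have "\<dots> = finsum N (\<lambda>b. f (v b \<odot>\<^bsub>free_on R B\<^esub> delta R b)) B"
    by (rule lin_map_finsum[OF F.module_axioms assms(2,3,4) tc])
  also have "\<dots> = finsum N (\<lambda>b. v b \<odot>\<^bsub>N\<^esub> f (delta R b)) B"
  proof (rule N.finsum_cong')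
    show "\<And>b. b \<in> B \<Longrightarrow> f (v b \<odot>\<^bsub>free_on R B\<^esub> delta R b) = v b \<odot>\<^bsub>N\<^esub> f (delta R b)"
      by (rule lin_map_smult[OF assms(3)]) (auto simp: vv delta_carrier[OF ring_axioms])
    show "(\<lambda>b. v b \<odot>\<^bsub>N\<^esub> f (delta R b)) \<in> B \<rightarrow> carrier N"
      using vv lin_map_closed[OF assms(3) delta_carrier[OF ring_axioms]] module.smult_closed[OF assms(2)]
      by auto
  qed simp
  finally show ?thesis .
qed

lemma free_lift:
  fixes R (structure)
  assumes "cring R" "module R Y" "module R Z" "finite B"
    and pi: "lin_map R Y Z p" and f: "lin_map R (free_on R B) Z f"
    and img: "f ` carrier (free_on R B) \<subseteq> p ` carrier Y"
  shows "\<exists>g. lin_map R (free_on R B) Y g \<and> (\<forall>x\<in>carrier (free_on R B). p (g x) = f x)"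
proof -
  interpret cring R by fact
  interpret F: module R "free_on R B" using free_on_module[OF assms(1)] .
  interpret Y: module R Y by fact
  interpret Z: module R Z by fact
  have "\<forall>b\<in>B. \<exists>y. y \<in> carrier Y \<and> p y = f (delta R b)"
  proof
    fix b assume b: "b \<in> B"
    have "f (delta R b) \<in> p ` carrier Y" by (rule subsetD[OF img imageI[OF delta_carrier[OF ring_axioms b]]])
    then show "\<exists>y. y \<in> carrier Y \<and> p y = f (delta R b)" by (auto simp: image_iff)
  qed
  then obtain y where y0: "\<forall>b\<in>B. y b \<in> carrier Y \<and> p (y b) = f (delta R b)"
    using bchoice[of B "\<lambda>b y. y \<in> carrier Y \<and> p y = f (delta R b)"] by blast
  have y: "\<And>b. b \<in> B \<Longrightarrow> y b \<in> carrier Y" "\<And>b. b \<in> B \<Longrightarrow> p (y b) = f (delta R b)"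
    using y0 by auto
  define g where "g v = finsum Y (\<lambda>b. v b \<odot>\<^bsub>Y\<^esub> y b) B" for v
  have vv: "\<And>v a. v \<in> carrier (free_on R B) \<Longrightarrow> v a \<in> carrier R" using free_on_val[OF ring_axioms] .
  have tc: "\<And>v. v \<in> carrier (free_on R B) \<Longrightarrow> (\<lambda>b. v b \<odot>\<^bsub>Y\<^esub> y b) \<in> B \<rightarrow> carrier Y"
    using vv y by auto
  have gl: "lin_map R (free_on R B) Y g"
    unfolding lin_map_def
  proof (intro conjI ballI)
    show "g \<in> carrier (free_on R B) \<rightarrow> carrier Y" unfolding g_def using tc by (auto intro: Y.finsum_closed)
  next
    fix v w assume v: "v \<in> carrier (free_on R B)" and w: "w \<in> carrier (free_on R B)"
    have "g (v \<oplus>\<^bsub>free_on R B\<^esub> w) = finsum Y (\<lambda>b. v b \<odot>\<^bsub>Y\<^esub> y b \<oplus>\<^bsub>Y\<^esub> w b \<odot>\<^bsub>Y\<^esub> y b) B"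
      unfolding g_def free_on_add
      by (rule Y.finsum_cong') (auto simp: vv[OF v] vv[OF w] y Y.smult_l_distr)
    also have "\<dots> = g v \<oplus>\<^bsub>Y\<^esub> g w" unfolding g_def
      using tc[OF v] tc[OF w] by (rule Y.finsum_addf)
    finally show "g (v \<oplus>\<^bsub>free_on R B\<^esub> w) = g v \<oplus>\<^bsub>Y\<^esub> g w" .
  next
    fix r v assume r: "r \<in> carrier R" and v: "v \<in> carrier (free_on R B)"
    have "g (r \<odot>\<^bsub>free_on R B\<^esub> v) = finsum Y (\<lambda>b. r \<odot>\<^bsub>Y\<^esub> (v b \<odot>\<^bsub>Y\<^esub> y b)) B"
      unfolding g_def free_on_smult
      by (rule Y.finsum_cong') (auto simp: vv[OF v] y r Y.smult_assoc1)
    also have "\<dots> = r \<odot>\<^bsub>Y\<^esub> g v" unfolding g_def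
      using Y.finsum_smult_ldistr[OF assms(4) r tc[OF v]] by simp
    finally show "g (r \<odot>\<^bsub>free_on R B\<^esub> v) = r \<odot>\<^bsub>Y\<^esub> g v" .
  qed
  have "p (g v) = f v" if v: "v \<in> carrier (free_on R B)" for v
  proof -
    have "p (g v) = finsum Z (\<lambda>b. p (v b \<odot>\<^bsub>Y\<^esub> y b)) B"
      unfolding g_def by (rule lin_map_finsum[OF Y.module_axioms Z.module_axioms pi assms(4) tc[OF v]])
    also have "\<dots> = finsum Z (\<lambda>b. v b \<odot>\<^bsub>Z\<^esub> f (delta R b)) B"
    proof (rule Z.finsum_cong')
      show "\<And>b. b \<in> B \<Longrightarrow> p (v b \<odot>\<^bsub>Y\<^esub> y b) = v b \<odot>\<^bsub>Z\<^esub> f (delta R b)"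
        using lin_map_smult[OF pi] vv[OF v] y by auto
      show "(\<lambda>b. v b \<odot>\<^bsub>Z\<^esub> f (delta R b)) \<in> B \<rightarrow> carrier Z"
        using vv[OF v] lin_map_closed[OF f delta_carrier[OF ring_axioms]] by auto
    qed simp
    also have "\<dots> = f v" using lin_map_free_expand[OF assms(1,3) f assms(4) v] by simp
    finally show ?thesis .
  qed
  then show ?thesis using gl by blast
qed



definition mc :: "'a ring \<Rightarrow> ('c \<Rightarrow> 'a) \<Rightarrow> bool" where
  "mc R v \<longleftrightarrow> (\<forall>x. v x \<in> max_ideal R)"

lemma local_mI: "local_ring R \<Longrightarrow> ideal (max_ideal R) R"
  using local_max_ideal by (auto simp: maximalideal_def)

lemma mI_sub: "local_ring R \<Longrightarrow> a \<in> max_ideal R \<Longrightarrow> a \<in> carrier R"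
  using local_mI by (meson additive_subgroup.a_Hcarr ideal.axioms(1))

lemma submodule_finsum:
  assumes "module R M" "submodule K R M" "finite A" "f \<in> A \<rightarrow> K"
  shows "finsum M f A \<in> K"
  using assms(3,4)
proof (induction A rule: finite_induct)
  case empty
  interpret module R M by fact
  show ?case using submodule.axioms(1)[OF assms(2)] by (simp add: subgroup.one_closed[of K "add_monoid M", simplified])
next
  case (insert y A)
  interpret module R M by fact
  have sub: "K \<subseteq> carrier M" using submoduleE(1)[OF assms(2)] .
  have fc: "f \<in> A \<rightarrow> carrier M" "f y \<in> carrier M" using insert(4) sub by auto
  have "finsum M f (insert y A) = f y \<oplus>\<^bsub>M\<^esub> finsum M f A"
    by (rule finsum_insert) (use insert fc in auto)
  then show ?case using submoduleE(5)[OF assms(2)] insert by auto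
qed

lemma span_sub_mc:
  fixes R (structure)
  assumes L: "local_ring R"
    and x: "x \<in> span R (free_on R B) {r \<odot>\<^bsub>free_on R B\<^esub> y | r y. r \<in> max_ideal R \<and> y \<in> carrier (free_on R B)}"
  shows "mc R x \<and> x \<in> carrier (free_on R B)"
proof -
  interpret cring R using L by (simp add: local_ring_def)
  interpret F: module R "free_on R B" using free_on_module[OF cring_axioms] .
  have mI: "ideal (max_ideal R) R" using local_mI[OF L] .
  let ?K = "{v \<in> carrier (free_on R B). mc R v}"
  have "submodule ?K R (free_on R B)"
  proof (rule F.submoduleI)
    show "?K \<subseteq> carrier (free_on R B)" by auto
    have "mc R (\<zero>\<^bsub>free_on R B\<^esub>)" unfolding mc_def free_on_zero
      using mI by (simp add: additive_subgroup.zero_closed ideal.axioms(1))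
    then show "\<zero>\<^bsub>free_on R B\<^esub> \<in> ?K" using F.zero_closed by simp
  next
    fix a assume a: "a \<in> ?K"
    have ac: "a \<in> carrier (free_on R B)" using a by simp
    have "mc R (\<ominus>\<^bsub>free_on R B\<^esub> a)"
      using a free_on_neg[OF cring_axioms ac] mI unfolding mc_def
      by (simp add: additive_subgroup.a_inv_closed ideal.axioms(1))
    then show "\<ominus>\<^bsub>free_on R B\<^esub> a \<in> ?K" using F.a_inv_closed[OF ac] by simp
  next
    fix a b assume a: "a \<in> ?K" and b: "b \<in> ?K"
    have "mc R (a \<oplus>\<^bsub>free_on R B\<^esub> b)"
      using a b mI unfolding mc_def free_on_add by (simp add: additive_subgroup.a_closed ideal.axioms(1))
    then show "a \<oplus>\<^bsub>free_on R B\<^esub> b \<in> ?K" using a b F.add.m_closed by simp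
  next
    fix a v assume a: "a \<in> carrier R" and v: "v \<in> ?K"
    have "mc R (a \<odot>\<^bsub>free_on R B\<^esub> v)"
      using a v mI unfolding mc_def free_on_smult by (simp add: ideal.I_l_closed)
    then show "a \<odot>\<^bsub>free_on R B\<^esub> v \<in> ?K" using a v F.smult_closed by simp
  qed
  moreover have "{r \<odot>\<^bsub>free_on R B\<^esub> y | r y. r \<in> max_ideal R \<and> y \<in> carrier (free_on R B)} \<subseteq> ?K"
  proof
    fix z assume "z \<in> {r \<odot>\<^bsub>free_on R B\<^esub> y | r y. r \<in> max_ideal R \<and> y \<in> carrier (free_on R B)}"
    then obtain r y where z: "z = r \<odot>\<^bsub>free_on R B\<^esub> y" "r \<in> max_ideal R" "y \<in> carrier (free_on R B)" by blast
    have "z \<in> carrier (free_on R B)" using z mI_sub[OF L] by simp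
    moreover have "mc R z" unfolding mc_def z(1) free_on_smult
      using z(2) free_on_val[OF ring_axioms z(3)] mI by (simp add: ideal.I_r_closed)
    ultimately show "z \<in> ?K" by simp
  qed
  ultimately show ?thesis using x unfolding span_def by blast
qed

lemma mc_in_span:
  fixes R (structure)
  assumes L: "local_ring R" and fin: "finite B" and v: "v \<in> carrier (free_on R B)" and m: "mc R v"
  shows "v \<in> span R (free_on R B) {r \<odot>\<^bsub>free_on R B\<^esub> y | r y. r \<in> max_ideal R \<and> y \<in> carrier (free_on R B)}"
  unfolding span_def
proof (rule InterI)
  interpret cring R using L by (simp add: local_ring_def)
  interpret F: module R "free_on R B" using free_on_module[OF cring_axioms] .
  fix K assume "K \<in> {K. submodule K R (free_on R B) \<and> {r \<odot>\<^bsub>free_on R B\<^esub> y | r y. r \<in> max_ideal R \<and> y \<in> carrier (free_on R B)} \<subseteq> K}"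
  then have K: "submodule K R (free_on R B)"
    and S: "{r \<odot>\<^bsub>free_on R B\<^esub> y | r y. r \<in> max_ideal R \<and> y \<in> carrier (free_on R B)} \<subseteq> K" by auto
  have "(\<lambda>b. v b \<odot>\<^bsub>free_on R B\<^esub> delta R b) \<in> B \<rightarrow> K"
  proof
    fix b assume b: "b \<in> B"
    have "v b \<odot>\<^bsub>free_on R B\<^esub> delta R b \<in> {r \<odot>\<^bsub>free_on R B\<^esub> y | r y. r \<in> max_ideal R \<and> y \<in> carrier (free_on R B)}"
      using m delta_carrier[OF ring_axioms b] unfolding mc_def by blast
    then show "v b \<odot>\<^bsub>free_on R B\<^esub> delta R b \<in> K" using S by blast
  qed
  then have "finsum (free_on R B) (\<lambda>b. v b \<odot>\<^bsub>free_on R B\<^esub> delta R b) B \<in> K"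
    by (rule submodule_finsum[OF F.module_axioms K fin])
  then show "v \<in> K" using free_on_expand[OF cring_axioms fin v] by simp
qed

lemma lin_mc:
  fixes R (structure)
  assumes L: "local_ring R" and fin: "finite B"
    and h: "lin_map R (free_on R B) (free_on R C) h"
    and v: "v \<in> carrier (free_on R B)" and m: "mc R v"
  shows "mc R (h v)"
proof -
  interpret cring R using L by (simp add: local_ring_def)
  interpret F: module R "free_on R B" using free_on_module[OF cring_axioms] .
  interpret G: module R "free_on R C" using free_on_module[OF cring_axioms] .
  have mI: "ideal (max_ideal R) R" using local_mI[OF L] .
  have tc: "(\<lambda>b. v b \<odot>\<^bsub>free_on R C\<^esub> h (delta R b)) \<in> B \<rightarrow> carrier (free_on R C)"
    using lin_map_closed[OF h delta_carrier[OF ring_axioms]] free_on_val[OF ring_axioms v] by auto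
  have "h v = finsum (free_on R C) (\<lambda>b. v b \<odot>\<^bsub>free_on R C\<^esub> h (delta R b)) B"
    by (rule lin_map_free_expand[OF cring_axioms G.module_axioms h fin v])
  then have "h v x = (\<Oplus>b\<in>B. v b \<otimes> h (delta R b) x)" for x
    using free_on_finsum_apply[OF cring_axioms fin tc] by (simp add: free_on_smult)
  moreover have "(\<Oplus>b\<in>B. v b \<otimes> h (delta R b) x) \<in> max_ideal R" for x
  proof (rule ideal_finsum[OF ring_axioms mI fin], rule ballI)
    fix b assume b: "b \<in> B"
    have "h (delta R b) \<in> carrier (free_on R C)" by (rule lin_map_closed[OF h delta_carrier[OF ring_axioms b]])
    then have c1: "h (delta R b) x \<in> carrier R" by (rule free_on_val[OF ring_axioms])
    have c2: "v b \<in> max_ideal R" using m unfolding mc_def by simp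
    show "v b \<otimes> h (delta R b) x \<in> max_ideal R" by (rule ideal.I_r_closed[OF mI c2 c1])
  qed
  ultimately show ?thesis unfolding mc_def by simp
qed

lemma rank_le:
  fixes R (structure)
  assumes L: "local_ring R" and finB: "finite B" and finC: "finite C"
    and al: "lin_map R (free_on R B) (free_on R C) \<alpha>"
    and be: "lin_map R (free_on R C) (free_on R B) \<beta>"
    and H: "\<forall>x\<in>carrier (free_on R B). mc R (\<beta> (\<alpha> x) \<ominus>\<^bsub>free_on R B\<^esub> x)"
  shows "card B \<le> card C"
proof -
  interpret cring R using L by (simp add: local_ring_def)
  interpret F: module R "free_on R B" using free_on_module[OF cring_axioms] .
  interpret G: module R "free_on R C" using free_on_module[OF cring_axioms] .
  define A where "A c b = \<alpha> (delta R b) c" for c b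
  define Bm where "Bm b c = \<beta> (delta R c) b" for b c
  have dB: "\<And>b. b \<in> B \<Longrightarrow> delta R b \<in> carrier (free_on R B)" using delta_carrier[OF ring_axioms] .
  have dC: "\<And>c. c \<in> C \<Longrightarrow> delta R c \<in> carrier (free_on R C)" using delta_carrier[OF ring_axioms] .
  have Ac: "\<forall>r\<in>C. \<forall>j\<in>B. A r j \<in> carrier R"
    unfolding A_def using free_on_val[OF ring_axioms lin_map_closed[OF al dB]] by auto
  have Bc: "\<forall>i\<in>B. \<forall>r\<in>C. Bm i r \<in> carrier R"
    unfolding Bm_def using free_on_val[OF ring_axioms lin_map_closed[OF be dC]] by auto
  have key: "\<forall>i\<in>B. \<forall>j\<in>B. (\<Oplus>r\<in>C. Bm i r \<otimes> A r j) \<ominus> (if i = j then \<one> else \<zero>) \<in> max_ideal R"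
  proof (intro ballI)
    fix i j assume i: "i \<in> B" and j: "j \<in> B"
    let ?v = "\<alpha> (delta R j)"
    have vc: "?v \<in> carrier (free_on R C)" using lin_map_closed[OF al dB[OF j]] .
    have tc: "(\<lambda>c. ?v c \<odot>\<^bsub>free_on R B\<^esub> \<beta> (delta R c)) \<in> C \<rightarrow> carrier (free_on R B)"
      using lin_map_closed[OF be dC] free_on_val[OF ring_axioms vc] by auto
    have "\<beta> ?v = finsum (free_on R B) (\<lambda>c. ?v c \<odot>\<^bsub>free_on R B\<^esub> \<beta> (delta R c)) C"
      by (rule lin_map_free_expand[OF cring_axioms F.module_axioms be finC vc])
    then have e: "\<beta> ?v i = (\<Oplus>c\<in>C. ?v c \<otimes> \<beta> (delta R c) i)"
      using free_on_finsum_apply[OF cring_axioms finC tc] by (simp add: free_on_smult)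
    also have "\<dots> = (\<Oplus>r\<in>C. Bm i r \<otimes> A r j)"
    proof (rule finsum_cong')
      fix c assume c: "c \<in> C"
      show "?v c \<otimes> \<beta> (delta R c) i = Bm i c \<otimes> A c j"
        unfolding A_def Bm_def
        using free_on_val[OF ring_axioms vc] free_on_val[OF ring_axioms lin_map_closed[OF be dC[OF c]]]
        by (simp add: m_comm)
    next
      show "(\<lambda>r. Bm i r \<otimes> A r j) \<in> C \<rightarrow> carrier R" using Ac Bc i j by auto
    qed simp
    finally have e2: "\<beta> ?v i = (\<Oplus>r\<in>C. Bm i r \<otimes> A r j)" .
    have "mc R (\<beta> ?v \<ominus>\<^bsub>free_on R B\<^esub> delta R j)" using H dB[OF j] by auto
    then have "(\<beta> ?v \<ominus>\<^bsub>free_on R B\<^esub> delta R j) i \<in> max_ideal R" unfolding mc_def by simp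
    moreover have "(\<beta> ?v \<ominus>\<^bsub>free_on R B\<^esub> delta R j) i = \<beta> ?v i \<ominus> delta R j i"
      using free_on_minus[OF cring_axioms lin_map_closed[OF be vc] dB[OF j]] by simp
    ultimately have "\<beta> ?v i \<ominus> delta R j i \<in> max_ideal R" by simp
    moreover have e3: "delta R j i = (if i = j then \<one> else \<zero>)" by (simp add: delta_def)
    ultimately show "(\<Oplus>r\<in>C. Bm i r \<otimes> A r j) \<ominus> (if i = j then \<one> else \<zero>) \<in> max_ideal R"
      by (simp only: e2 e3)
  qed
  show ?thesis by (rule matrix_card[OF L finB finC Ac Bc key])
qed



lemma (in abelian_group) ag1: "x \<in> carrier G \<Longrightarrow> y \<in> carrier G \<Longrightarrow> (x \<oplus> y) \<ominus> x \<ominus> y = \<zero>"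
proof -
  assume x: "x \<in> carrier G" and y: "y \<in> carrier G"
  have "(x \<oplus> y) \<ominus> x \<ominus> y = x \<oplus> (y \<oplus> (\<ominus> x \<oplus> \<ominus> y))" using x y by (simp add: a_minus_def minus_add a_ac)
  also have "y \<oplus> (\<ominus> x \<oplus> \<ominus> y) = \<ominus> x \<oplus> (y \<oplus> \<ominus> y)" using x y by (simp add: a_lcomm)
  also have "\<dots> = \<ominus> x" using x y by (simp add: r_neg)
  finally show ?thesis using x by (simp add: r_neg)
qed

lemma (in abelian_group) ag3: "a \<in> carrier G \<Longrightarrow> x \<in> carrier G \<Longrightarrow> x \<oplus> (a \<ominus> x) = a"
  by (simp add: a_minus_def a_ac r_neg)

lemma (in abelian_group) ag4: "a \<in> carrier G \<Longrightarrow> c \<in> carrier G \<Longrightarrow> a = (a \<ominus> c) \<oplus> c"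
  by (simp add: a_minus_def a_ac r_neg)

lemma (in abelian_group) ag5: "a \<in> carrier G \<Longrightarrow> a \<ominus> \<zero> = a"
  by (simp add: a_minus_def)

lemma (in abelian_group) ag6: "a \<in> carrier G \<Longrightarrow> a \<ominus> a = \<zero>"
  by (simp add: a_minus_def r_neg)


lemma lin_map_id: "lin_map R M M (\<lambda>x. x)"
  unfolding lin_map_def by auto

lemma comparison_step:
  fixes R (structure)
  assumes L: "local_ring R" and fin: "finite B0" "finite B1" "finite C0" "finite C1"
    and d: "lin_map R (free_on R B1) (free_on R B0) d"
    and d': "lin_map R (free_on R C1) (free_on R C0) d'"
    and al: "lin_map R (free_on R B0) (free_on R C0) \<alpha>"
    and be: "lin_map R (free_on R C0) (free_on R B0) \<beta>"
    and alK: "\<alpha> ` (d ` carrier (free_on R B1)) \<subseteq> d' ` carrier (free_on R C1)"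
    and beK: "\<beta> ` (d' ` carrier (free_on R C1)) \<subseteq> d ` carrier (free_on R B1)"
    and ph: "lin_map R (free_on R B0) (free_on R B0) \<phi>"
    and phK: "\<phi> ` carrier (free_on R B0) \<subseteq> d ` carrier (free_on R B1)"
    and inv: "\<forall>x\<in>d ` carrier (free_on R B1). \<beta> (\<alpha> x) = x \<oplus>\<^bsub>free_on R B0\<^esub> \<phi> x"
    and md: "\<forall>x\<in>carrier (free_on R B1). mc R (d x)"
    and mK: "\<forall>x\<in>carrier (free_on R B1). d x = \<zero>\<^bsub>free_on R B0\<^esub> \<longrightarrow> mc R x"
  shows "\<exists>\<alpha>' \<beta>' \<phi>'. lin_map R (free_on R B1) (free_on R C1) \<alpha>' \<and> lin_map R (free_on R C1) (free_on R B1) \<beta>'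
     \<and> \<alpha>' ` {x\<in>carrier (free_on R B1). d x = \<zero>\<^bsub>free_on R B0\<^esub>} \<subseteq> {y\<in>carrier (free_on R C1). d' y = \<zero>\<^bsub>free_on R C0\<^esub>}
     \<and> \<beta>' ` {y\<in>carrier (free_on R C1). d' y = \<zero>\<^bsub>free_on R C0\<^esub>} \<subseteq> {x\<in>carrier (free_on R B1). d x = \<zero>\<^bsub>free_on R B0\<^esub>}
     \<and> lin_map R (free_on R B1) (free_on R B1) \<phi>'
     \<and> \<phi>' ` carrier (free_on R B1) \<subseteq> {x\<in>carrier (free_on R B1). d x = \<zero>\<^bsub>free_on R B0\<^esub>}
     \<and> (\<forall>x\<in>{x\<in>carrier (free_on R B1). d x = \<zero>\<^bsub>free_on R B0\<^esub>}. \<beta>' (\<alpha>' x) = x \<oplus>\<^bsub>free_on R B1\<^esub> \<phi>' x)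
     \<and> (\<forall>x\<in>carrier (free_on R B1). mc R (\<beta>' (\<alpha>' x) \<ominus>\<^bsub>free_on R B1\<^esub> x))"
proof -
  interpret cring R using L by (simp add: local_ring_def)
  interpret P0: module R "free_on R B0" using free_on_module[OF cring_axioms] .
  interpret P1: module R "free_on R B1" using free_on_module[OF cring_axioms] .
  interpret Q0: module R "free_on R C0" using free_on_module[OF cring_axioms] .
  interpret Q1: module R "free_on R C1" using free_on_module[OF cring_axioms] .
  have P0m: "module R (free_on R B0)" and P1m: "module R (free_on R B1)"
    and Q0m: "module R (free_on R C0)" and Q1m: "module R (free_on R C1)"
    using free_on_module[OF cring_axioms] by auto
  have dc: "\<And>x. x \<in> carrier (free_on R B1) \<Longrightarrow> d x \<in> carrier (free_on R B0)" using lin_map_closed[OF d] .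
  have d'c: "\<And>x. x \<in> carrier (free_on R C1) \<Longrightarrow> d' x \<in> carrier (free_on R C0)" using lin_map_closed[OF d'] .
  have alc: "\<And>x. x \<in> carrier (free_on R B0) \<Longrightarrow> \<alpha> x \<in> carrier (free_on R C0)" using lin_map_closed[OF al] .
  have bec: "\<And>x. x \<in> carrier (free_on R C0) \<Longrightarrow> \<beta> x \<in> carrier (free_on R B0)" using lin_map_closed[OF be] .
  have phc: "\<And>x. x \<in> carrier (free_on R B0) \<Longrightarrow> \<phi> x \<in> carrier (free_on R B0)" using lin_map_closed[OF ph] .
  have "\<exists>g. lin_map R (free_on R B1) (free_on R C1) g \<and> (\<forall>x\<in>carrier (free_on R B1). d' (g x) = \<alpha> (d x))"
  proof (rule free_lift[OF cring_axioms Q1m Q0m fin(2) d' lin_map_comp[OF d al]])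
    show "(\<lambda>x. \<alpha> (d x)) ` carrier (free_on R B1) \<subseteq> d' ` carrier (free_on R C1)" using alK by auto
  qed
  then obtain \<alpha>' where al': "lin_map R (free_on R B1) (free_on R C1) \<alpha>'"
    and al'd: "\<And>x. x \<in> carrier (free_on R B1) \<Longrightarrow> d' (\<alpha>' x) = \<alpha> (d x)" by blast
  have "\<exists>g. lin_map R (free_on R C1) (free_on R B1) g \<and> (\<forall>x\<in>carrier (free_on R C1). d (g x) = \<beta> (d' x))"
  proof (rule free_lift[OF cring_axioms P1m P0m fin(4) d lin_map_comp[OF d' be]])
    show "(\<lambda>x. \<beta> (d' x)) ` carrier (free_on R C1) \<subseteq> d ` carrier (free_on R B1)" using beK by auto
  qed
  then obtain \<beta>' where be': "lin_map R (free_on R C1) (free_on R B1) \<beta>'"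
    and be'd: "\<And>x. x \<in> carrier (free_on R C1) \<Longrightarrow> d (\<beta>' x) = \<beta> (d' x)" by blast
  have "\<exists>g. lin_map R (free_on R B0) (free_on R B1) g \<and> (\<forall>x\<in>carrier (free_on R B0). d (g x) = \<phi> x)"
    by (rule free_lift[OF cring_axioms P1m P0m fin(1) d ph phK])
  then obtain h where h: "lin_map R (free_on R B0) (free_on R B1) h"
    and hd: "\<And>x. x \<in> carrier (free_on R B0) \<Longrightarrow> d (h x) = \<phi> x" by blast
  have al'c: "\<And>x. x \<in> carrier (free_on R B1) \<Longrightarrow> \<alpha>' x \<in> carrier (free_on R C1)" using lin_map_closed[OF al'] .
  have be'c: "\<And>x. x \<in> carrier (free_on R C1) \<Longrightarrow> \<beta>' x \<in> carrier (free_on R B1)" using lin_map_closed[OF be'] .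
  have hc: "\<And>x. x \<in> carrier (free_on R B0) \<Longrightarrow> h x \<in> carrier (free_on R B1)" using lin_map_closed[OF h] .
  define \<phi>' where "\<phi>' x = (\<beta>' (\<alpha>' x) \<ominus>\<^bsub>free_on R B1\<^esub> x) \<ominus>\<^bsub>free_on R B1\<^esub> h (d x)" for x
  have l1: "lin_map R (free_on R B1) (free_on R B1) (\<lambda>x. \<beta>' (\<alpha>' x) \<ominus>\<^bsub>free_on R B1\<^esub> x)"
    by (rule lin_map_diff[OF P1m P1m lin_map_comp[OF al' be'] lin_map_id])
  have ph': "lin_map R (free_on R B1) (free_on R B1) \<phi>'"
    unfolding \<phi>'_def by (rule lin_map_diff[OF P1m P1m l1 lin_map_comp[OF d h]])
  have ph'c: "\<And>x. x \<in> carrier (free_on R B1) \<Longrightarrow> \<phi>' x \<in> carrier (free_on R B1)" using lin_map_closed[OF ph'] .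
  let ?K1 = "{x\<in>carrier (free_on R B1). d x = \<zero>\<^bsub>free_on R B0\<^esub>}"
  let ?L1 = "{y\<in>carrier (free_on R C1). d' y = \<zero>\<^bsub>free_on R C0\<^esub>}"
  have A1: "\<alpha>' ` ?K1 \<subseteq> ?L1"
  proof
    fix y assume "y \<in> \<alpha>' ` ?K1"
    then obtain x where x: "x \<in> carrier (free_on R B1)" "d x = \<zero>\<^bsub>free_on R B0\<^esub>" "y = \<alpha>' x" by blast
    have "d' y = \<alpha> \<zero>\<^bsub>free_on R B0\<^esub>" using al'd[OF x(1)] x by simp
    also have "\<dots> = \<zero>\<^bsub>free_on R C0\<^esub>" by (rule lin_map_zero[OF P0m Q0m al])
    finally show "y \<in> ?L1" using al'c[OF x(1)] x by simp
  qed
  have A2: "\<beta>' ` ?L1 \<subseteq> ?K1"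
  proof
    fix y assume "y \<in> \<beta>' ` ?L1"
    then obtain x where x: "x \<in> carrier (free_on R C1)" "d' x = \<zero>\<^bsub>free_on R C0\<^esub>" "y = \<beta>' x" by blast
    have "d y = \<beta> \<zero>\<^bsub>free_on R C0\<^esub>" using be'd[OF x(1)] x by simp
    also have "\<dots> = \<zero>\<^bsub>free_on R B0\<^esub>" by (rule lin_map_zero[OF Q0m P0m be])
    finally show "y \<in> ?K1" using be'c[OF x(1)] x by simp
  qed
  have A3: "\<phi>' ` carrier (free_on R B1) \<subseteq> ?K1"
  proof
    fix y assume "y \<in> \<phi>' ` carrier (free_on R B1)"
    then obtain x where x: "x \<in> carrier (free_on R B1)" "y = \<phi>' x" by blast
    have dx: "d x \<in> d ` carrier (free_on R B1)" using x by simp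
    have dxc: "d x \<in> carrier (free_on R B0)" using dc[OF x(1)] .
    have "d (\<phi>' x) = (d (\<beta>' (\<alpha>' x)) \<ominus>\<^bsub>free_on R B0\<^esub> d x) \<ominus>\<^bsub>free_on R B0\<^esub> d (h (d x))"
      unfolding \<phi>'_def
      using lin_map_minus[OF P1m P0m d] be'c al'c x(1) hc dxc
      by (simp add: P1.minus_closed)
    also have "\<dots> = (\<beta> (\<alpha> (d x)) \<ominus>\<^bsub>free_on R B0\<^esub> d x) \<ominus>\<^bsub>free_on R B0\<^esub> \<phi> (d x)"
      using be'd[OF al'c[OF x(1)]] al'd[OF x(1)] hd[OF dxc] by simp
    also have "\<dots> = ((d x \<oplus>\<^bsub>free_on R B0\<^esub> \<phi> (d x)) \<ominus>\<^bsub>free_on R B0\<^esub> d x) \<ominus>\<^bsub>free_on R B0\<^esub> \<phi> (d x)"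
      using inv x(1) by simp
    also have "\<dots> = \<zero>\<^bsub>free_on R B0\<^esub>" by (rule P0.ag1[OF dxc phc[OF dxc]])
    finally show "y \<in> ?K1" using x ph'c by simp
  qed
  have A4: "\<forall>x\<in>?K1. \<beta>' (\<alpha>' x) = x \<oplus>\<^bsub>free_on R B1\<^esub> \<phi>' x"
  proof
    fix x assume x: "x \<in> ?K1"
    then have xc: "x \<in> carrier (free_on R B1)" and dx0: "d x = \<zero>\<^bsub>free_on R B0\<^esub>" by auto
    have h0: "h (d x) = \<zero>\<^bsub>free_on R B1\<^esub>" using dx0 lin_map_zero[OF P0m P1m h] by simp
    have "\<phi>' x = \<beta>' (\<alpha>' x) \<ominus>\<^bsub>free_on R B1\<^esub> x" unfolding \<phi>'_def h0
      using P1.ag5 be'c al'c xc by simp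
    then show "\<beta>' (\<alpha>' x) = x \<oplus>\<^bsub>free_on R B1\<^esub> \<phi>' x"
      using P1.ag3[OF be'c[OF al'c[OF xc]] xc] by simp
  qed
  have A5: "\<forall>x\<in>carrier (free_on R B1). mc R (\<beta>' (\<alpha>' x) \<ominus>\<^bsub>free_on R B1\<^esub> x)"
  proof
    fix x assume xc: "x \<in> carrier (free_on R B1)"
    have dxc: "d x \<in> carrier (free_on R B0)" using dc[OF xc] .
    have e: "\<beta>' (\<alpha>' x) \<ominus>\<^bsub>free_on R B1\<^esub> x = \<phi>' x \<oplus>\<^bsub>free_on R B1\<^esub> h (d x)"
      unfolding \<phi>'_def by (rule P1.ag4) (use be'c al'c xc hc dxc in auto)
    have m1: "mc R (\<phi>' x)" using A3 xc mK by blast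
    have m2: "mc R (h (d x))" by (rule lin_mc[OF L fin(1) h dxc]) (use md xc in auto)
    have "mc R (\<phi>' x \<oplus>\<^bsub>free_on R B1\<^esub> h (d x))"
      using m1 m2 local_mI[OF L] unfolding mc_def free_on_add
      by (simp add: additive_subgroup.a_closed ideal.axioms(1))
    then show "mc R (\<beta>' (\<alpha>' x) \<ominus>\<^bsub>free_on R B1\<^esub> x)" using e by simp
  qed
  show ?thesis using al' be' A1 A2 ph' A3 A4 A5 by blast
qed



lemma betti_le:
  fixes R (structure)
  assumes L: "local_ring R"
    and rF: "is_resolution R N (\<lambda>i. free_on R (BF i)) dF eF"
    and mF: "minimal_complex R (\<lambda>i. free_on R (BF i)) dF"
    and fF: "\<And>i. finite (BF i)"
    and rG: "is_resolution R N (\<lambda>i. free_on R (BG i)) dG eG"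
    and mG: "minimal_complex R (\<lambda>i. free_on R (BG i)) dG"
    and fG: "\<And>i. finite (BG i)"
  shows "card (BF k) \<le> card (BG k)"
proof -
  interpret cring R using L by (simp add: local_ring_def)
  have Nm: "module R N" using rF unfolding is_resolution_def by simp
  interpret N: module R N by fact
  have Fm: "\<And>i. module R (free_on R (BF i))" and Gm: "\<And>i. module R (free_on R (BG i))"
    using free_on_module[OF cring_axioms] by auto
  have dF: "\<And>i. lin_map R (free_on R (BF (Suc i))) (free_on R (BF i)) (dF (Suc i))"
    using rF unfolding is_resolution_def by simp
  have dG: "\<And>i. lin_map R (free_on R (BG (Suc i))) (free_on R (BG i)) (dG (Suc i))"
    using rG unfolding is_resolution_def by simp
  have eF: "lin_map R (free_on R (BF 0)) N eF" and eFs: "eF ` carrier (free_on R (BF 0)) = carrier N"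
    using rF unfolding is_resolution_def by auto
  have eG: "lin_map R (free_on R (BG 0)) N eG" and eGs: "eG ` carrier (free_on R (BG 0)) = carrier N"
    using rG unfolding is_resolution_def by auto
  define KF where "KF i = dF (Suc i) ` carrier (free_on R (BF (Suc i)))" for i
  define KG where "KG i = dG (Suc i) ` carrier (free_on R (BG (Suc i)))" for i
  have kF0: "{x \<in> carrier (free_on R (BF 0)). eF x = \<zero>\<^bsub>N\<^esub>} = KF 0"
    using rF unfolding is_resolution_def lin_ker_def KF_def by simp
  have kG0: "{x \<in> carrier (free_on R (BG 0)). eG x = \<zero>\<^bsub>N\<^esub>} = KG 0"
    using rG unfolding is_resolution_def lin_ker_def KG_def by simp
  have kF: "\<And>i. {x \<in> carrier (free_on R (BF (Suc i))). dF (Suc i) x = \<zero>\<^bsub>free_on R (BF i)\<^esub>} = KF (Suc i)"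
  proof -
    fix i
    have all: "\<forall>i\<ge>1. lin_ker (free_on R (BF i)) (free_on R (BF (i - 1))) (dF i) = dF (Suc i) ` carrier (free_on R (BF (Suc i)))"
      using rF unfolding is_resolution_def by (elim conjE)
    have "lin_ker (free_on R (BF (Suc i))) (free_on R (BF (Suc i - 1))) (dF (Suc i)) = dF (Suc (Suc i)) ` carrier (free_on R (BF (Suc (Suc i))))"
      using spec[OF all, of "Suc i"] by simp
    then show "{x \<in> carrier (free_on R (BF (Suc i))). dF (Suc i) x = \<zero>\<^bsub>free_on R (BF i)\<^esub>} = KF (Suc i)"
      unfolding lin_ker_def KF_def by simp
  qed
  have kG: "\<And>i. {x \<in> carrier (free_on R (BG (Suc i))). dG (Suc i) x = \<zero>\<^bsub>free_on R (BG i)\<^esub>} = KG (Suc i)"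
  proof -
    fix i
    have all: "\<forall>i\<ge>1. lin_ker (free_on R (BG i)) (free_on R (BG (i - 1))) (dG i) = dG (Suc i) ` carrier (free_on R (BG (Suc i)))"
      using rG unfolding is_resolution_def by (elim conjE)
    have "lin_ker (free_on R (BG (Suc i))) (free_on R (BG (Suc i - 1))) (dG (Suc i)) = dG (Suc (Suc i)) ` carrier (free_on R (BG (Suc (Suc i))))"
      using spec[OF all, of "Suc i"] by simp
    then show "{x \<in> carrier (free_on R (BG (Suc i))). dG (Suc i) x = \<zero>\<^bsub>free_on R (BG i)\<^esub>} = KG (Suc i)"
      unfolding lin_ker_def KG_def by simp
  qed
  have mKF: "\<And>i x. x \<in> KF i \<Longrightarrow> mc R x"
  proof -
    fix i x assume "x \<in> KF i"
    then have "x \<in> span R (free_on R (BF i)) {r \<odot>\<^bsub>free_on R (BF i)\<^esub> y | r y. r \<in> max_ideal R \<and> y \<in> carrier (free_on R (BF i))}"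
      unfolding KF_def by (rule subsetD[OF mF[unfolded minimal_complex_def, rule_format]])
    then show "mc R x" by (rule conjunct1[OF span_sub_mc[OF L]])
  qed
  define Inv where "Inv k = (\<exists>\<alpha> \<beta> \<phi>. lin_map R (free_on R (BF k)) (free_on R (BG k)) \<alpha>
     \<and> lin_map R (free_on R (BG k)) (free_on R (BF k)) \<beta>
     \<and> \<alpha> ` KF k \<subseteq> KG k \<and> \<beta> ` KG k \<subseteq> KF k
     \<and> lin_map R (free_on R (BF k)) (free_on R (BF k)) \<phi>
     \<and> \<phi> ` carrier (free_on R (BF k)) \<subseteq> KF k
     \<and> (\<forall>x\<in>KF k. \<beta> (\<alpha> x) = x \<oplus>\<^bsub>free_on R (BF k)\<^esub> \<phi> x))" for k
  define Rk where "Rk k = (\<exists>\<alpha> \<beta>. lin_map R (free_on R (BF k)) (free_on R (BG k)) \<alpha>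
     \<and> lin_map R (free_on R (BG k)) (free_on R (BF k)) \<beta>
     \<and> (\<forall>x\<in>carrier (free_on R (BF k)). mc R (\<beta> (\<alpha> x) \<ominus>\<^bsub>free_on R (BF k)\<^esub> x)))" for k
  have "Inv k \<and> Rk k"
  proof (induction k)
    case 0
    interpret P0: module R "free_on R (BF 0)" by (rule Fm)
    have "\<exists>g. lin_map R (free_on R (BF 0)) (free_on R (BG 0)) g \<and> (\<forall>x\<in>carrier (free_on R (BF 0)). eG (g x) = eF x)"
      by (rule free_lift[OF cring_axioms Gm Nm fF eG eF]) (use eFs eGs in simp)
    then obtain \<alpha> where al: "lin_map R (free_on R (BF 0)) (free_on R (BG 0)) \<alpha>"
      and ale: "\<And>x. x \<in> carrier (free_on R (BF 0)) \<Longrightarrow> eG (\<alpha> x) = eF x" by blast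
    have "\<exists>g. lin_map R (free_on R (BG 0)) (free_on R (BF 0)) g \<and> (\<forall>x\<in>carrier (free_on R (BG 0)). eF (g x) = eG x)"
      by (rule free_lift[OF cring_axioms Fm Nm fG eF eG]) (use eFs eGs in simp)
    then obtain \<beta> where be: "lin_map R (free_on R (BG 0)) (free_on R (BF 0)) \<beta>"
      and bee: "\<And>x. x \<in> carrier (free_on R (BG 0)) \<Longrightarrow> eF (\<beta> x) = eG x" by blast
    have alc: "\<And>x. x \<in> carrier (free_on R (BF 0)) \<Longrightarrow> \<alpha> x \<in> carrier (free_on R (BG 0))" using lin_map_closed[OF al] .
    have bec: "\<And>x. x \<in> carrier (free_on R (BG 0)) \<Longrightarrow> \<beta> x \<in> carrier (free_on R (BF 0))" using lin_map_closed[OF be] .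
    define \<phi> where "\<phi> x = \<beta> (\<alpha> x) \<ominus>\<^bsub>free_on R (BF 0)\<^esub> x" for x
    have ph: "lin_map R (free_on R (BF 0)) (free_on R (BF 0)) \<phi>"
      unfolding \<phi>_def by (rule lin_map_diff[OF Fm Fm lin_map_comp[OF al be] lin_map_id])
    have phK: "\<phi> ` carrier (free_on R (BF 0)) \<subseteq> KF 0"
    proof
      fix y assume "y \<in> \<phi> ` carrier (free_on R (BF 0))"
      then obtain x where x: "x \<in> carrier (free_on R (BF 0))" "y = \<phi> x" by blast
      have "eF y = eF (\<beta> (\<alpha> x)) \<ominus>\<^bsub>N\<^esub> eF x"
        unfolding x(2) \<phi>_def by (rule lin_map_minus[OF Fm Nm eF bec[OF alc[OF x(1)]] x(1)])
      also have "\<dots> = \<zero>\<^bsub>N\<^esub>" using bee[OF alc[OF x(1)]] ale[OF x(1)] N.ag6 lin_map_closed[OF eF x(1)] by simp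
      finally have "eF y = \<zero>\<^bsub>N\<^esub>" .
      moreover have "y \<in> carrier (free_on R (BF 0))" using x lin_map_closed[OF ph] by simp
      ultimately have "y \<in> {x \<in> carrier (free_on R (BF 0)). eF x = \<zero>\<^bsub>N\<^esub>}" by simp
      then show "y \<in> KF 0" unfolding kF0 .
    qed
    have aK: "\<alpha> ` KF 0 \<subseteq> KG 0"
    proof
      fix y assume "y \<in> \<alpha> ` KF 0"
      then obtain x where x: "x \<in> KF 0" "y = \<alpha> x" by blast
      have "x \<in> {x \<in> carrier (free_on R (BF 0)). eF x = \<zero>\<^bsub>N\<^esub>}" unfolding kF0 by (rule x(1))
      then have xc: "x \<in> carrier (free_on R (BF 0))" "eF x = \<zero>\<^bsub>N\<^esub>" by simp_all
      have "y \<in> {x \<in> carrier (free_on R (BG 0)). eG x = \<zero>\<^bsub>N\<^esub>}"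
        using ale[OF xc(1)] alc[OF xc(1)] x(2) xc(2) by simp
      then show "y \<in> KG 0" unfolding kG0 .
    qed
    have bK: "\<beta> ` KG 0 \<subseteq> KF 0"
    proof
      fix y assume "y \<in> \<beta> ` KG 0"
      then obtain x where x: "x \<in> KG 0" "y = \<beta> x" by blast
      have "x \<in> {x \<in> carrier (free_on R (BG 0)). eG x = \<zero>\<^bsub>N\<^esub>}" unfolding kG0 by (rule x(1))
      then have xc: "x \<in> carrier (free_on R (BG 0))" "eG x = \<zero>\<^bsub>N\<^esub>" by simp_all
      have "y \<in> {x \<in> carrier (free_on R (BF 0)). eF x = \<zero>\<^bsub>N\<^esub>}"
        using bee[OF xc(1)] bec[OF xc(1)] x(2) xc(2) by simp
      then show "y \<in> KF 0" unfolding kF0 .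
    qed
    have ii: "\<forall>x\<in>KF 0. \<beta> (\<alpha> x) = x \<oplus>\<^bsub>free_on R (BF 0)\<^esub> \<phi> x"
    proof
      fix x assume "x \<in> KF 0"
      then have "x \<in> {x \<in> carrier (free_on R (BF 0)). eF x = \<zero>\<^bsub>N\<^esub>}" unfolding kF0 .
      then have xc: "x \<in> carrier (free_on R (BF 0))" by simp
      show "\<beta> (\<alpha> x) = x \<oplus>\<^bsub>free_on R (BF 0)\<^esub> \<phi> x"
        unfolding \<phi>_def using P0.ag3[OF bec[OF alc[OF xc]] xc] by simp
    qed
    have rk: "\<forall>x\<in>carrier (free_on R (BF 0)). mc R (\<beta> (\<alpha> x) \<ominus>\<^bsub>free_on R (BF 0)\<^esub> x)"
    proof
      fix x assume x: "x \<in> carrier (free_on R (BF 0))"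
      have "\<phi> x \<in> KF 0" using phK x by auto
      then show "mc R (\<beta> (\<alpha> x) \<ominus>\<^bsub>free_on R (BF 0)\<^esub> x)" using mKF unfolding \<phi>_def by simp
    qed
    have I0: "Inv 0" unfolding Inv_def
      by (rule exI[of _ \<alpha>], rule exI[of _ \<beta>], rule exI[of _ \<phi>]) (intro conjI; fact)
    have R0: "Rk 0" unfolding Rk_def
      by (rule exI[of _ \<alpha>], rule exI[of _ \<beta>]) (intro conjI; fact)
    show ?case using I0 R0 by simp
  next
    case (Suc k)
    from Suc.IH have "Inv k" by simp
    then obtain \<alpha> \<beta> \<phi> where
      al: "lin_map R (free_on R (BF k)) (free_on R (BG k)) \<alpha>"
      and be: "lin_map R (free_on R (BG k)) (free_on R (BF k)) \<beta>"
      and aK: "\<alpha> ` KF k \<subseteq> KG k" and bK: "\<beta> ` KG k \<subseteq> KF k"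
      and ph: "lin_map R (free_on R (BF k)) (free_on R (BF k)) \<phi>"
      and phK: "\<phi> ` carrier (free_on R (BF k)) \<subseteq> KF k"
      and ii: "\<forall>x\<in>KF k. \<beta> (\<alpha> x) = x \<oplus>\<^bsub>free_on R (BF k)\<^esub> \<phi> x"
      unfolding Inv_def by (elim exE conjE) (rule that)
    have md: "\<forall>x\<in>carrier (free_on R (BF (Suc k))). mc R (dF (Suc k) x)"
    proof
      fix x assume "x \<in> carrier (free_on R (BF (Suc k)))"
      then have "dF (Suc k) x \<in> KF k" unfolding KF_def by simp
      then show "mc R (dF (Suc k) x)" by (rule mKF)
    qed
    have mK: "\<forall>x\<in>carrier (free_on R (BF (Suc k))). dF (Suc k) x = \<zero>\<^bsub>free_on R (BF k)\<^esub> \<longrightarrow> mc R x"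
    proof (intro ballI impI)
      fix x assume "x \<in> carrier (free_on R (BF (Suc k)))" "dF (Suc k) x = \<zero>\<^bsub>free_on R (BF k)\<^esub>"
      then have "x \<in> {x \<in> carrier (free_on R (BF (Suc k))). dF (Suc k) x = \<zero>\<^bsub>free_on R (BF k)\<^esub>}" by simp
      then have "x \<in> KF (Suc k)" unfolding kF .
      then show "mc R x" by (rule mKF)
    qed
    have "\<exists>\<alpha>' \<beta>' \<phi>'. lin_map R (free_on R (BF (Suc k))) (free_on R (BG (Suc k))) \<alpha>' \<and> lin_map R (free_on R (BG (Suc k))) (free_on R (BF (Suc k))) \<beta>'
     \<and> \<alpha>' ` {x\<in>carrier (free_on R (BF (Suc k))). dF (Suc k) x = \<zero>\<^bsub>free_on R (BF k)\<^esub>} \<subseteq> {y\<in>carrier (free_on R (BG (Suc k))). dG (Suc k) y = \<zero>\<^bsub>free_on R (BG k)\<^esub>}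
     \<and> \<beta>' ` {y\<in>carrier (free_on R (BG (Suc k))). dG (Suc k) y = \<zero>\<^bsub>free_on R (BG k)\<^esub>} \<subseteq> {x\<in>carrier (free_on R (BF (Suc k))). dF (Suc k) x = \<zero>\<^bsub>free_on R (BF k)\<^esub>}
     \<and> lin_map R (free_on R (BF (Suc k))) (free_on R (BF (Suc k))) \<phi>'
     \<and> \<phi>' ` carrier (free_on R (BF (Suc k))) \<subseteq> {x\<in>carrier (free_on R (BF (Suc k))). dF (Suc k) x = \<zero>\<^bsub>free_on R (BF k)\<^esub>}
     \<and> (\<forall>x\<in>{x\<in>carrier (free_on R (BF (Suc k))). dF (Suc k) x = \<zero>\<^bsub>free_on R (BF k)\<^esub>}. \<beta>' (\<alpha>' x) = x \<oplus>\<^bsub>free_on R (BF (Suc k))\<^esub> \<phi>' x)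
     \<and> (\<forall>x\<in>carrier (free_on R (BF (Suc k))). mc R (\<beta>' (\<alpha>' x) \<ominus>\<^bsub>free_on R (BF (Suc k))\<^esub> x))"
      by (rule comparison_step[OF L fF fF fG fG dF dG al be aK[unfolded KF_def KG_def] bK[unfolded KF_def KG_def]
            ph phK[unfolded KF_def] ii[unfolded KF_def] md mK])
    then obtain \<alpha>' \<beta>' \<phi>' where
      H1: "lin_map R (free_on R (BF (Suc k))) (free_on R (BG (Suc k))) \<alpha>'"
      and H2: "lin_map R (free_on R (BG (Suc k))) (free_on R (BF (Suc k))) \<beta>'"
      and H3: "\<alpha>' ` KF (Suc k) \<subseteq> KG (Suc k)" and H4: "\<beta>' ` KG (Suc k) \<subseteq> KF (Suc k)"
      and H5: "lin_map R (free_on R (BF (Suc k))) (free_on R (BF (Suc k))) \<phi>'"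
      and H6: "\<phi>' ` carrier (free_on R (BF (Suc k))) \<subseteq> KF (Suc k)"
      and H7: "\<forall>x\<in>KF (Suc k). \<beta>' (\<alpha>' x) = x \<oplus>\<^bsub>free_on R (BF (Suc k))\<^esub> \<phi>' x"
      and H8: "\<forall>x\<in>carrier (free_on R (BF (Suc k))). mc R (\<beta>' (\<alpha>' x) \<ominus>\<^bsub>free_on R (BF (Suc k))\<^esub> x)"
      unfolding kF kG by (elim exE conjE) (rule that)
    have I1: "Inv (Suc k)" unfolding Inv_def
      by (rule exI[of _ \<alpha>'], rule exI[of _ \<beta>'], rule exI[of _ \<phi>']) (intro conjI; fact)
    have R1: "Rk (Suc k)" unfolding Rk_def
      by (rule exI[of _ \<alpha>'], rule exI[of _ \<beta>']) (intro conjI; fact)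
    show ?case using I1 R1 by simp
  qed
  then have "Rk k" by simp
  then obtain \<alpha> \<beta> where al: "lin_map R (free_on R (BF k)) (free_on R (BG k)) \<alpha>"
     and be: "lin_map R (free_on R (BG k)) (free_on R (BF k)) \<beta>"
     and H: "\<forall>x\<in>carrier (free_on R (BF k)). mc R (\<beta> (\<alpha> x) \<ominus>\<^bsub>free_on R (BF k)\<^esub> x)"
    unfolding Rk_def by blast
  show ?thesis by (rule rank_le[OF L fF fG al be H])
qed



definition tr :: "'a ring \<Rightarrow> (nat \<Rightarrow> 'c) \<Rightarrow> nat \<Rightarrow> ('c \<Rightarrow> 'a) \<Rightarrow> (nat \<Rightarrow> 'a)" where
  "tr R \<sigma> n v = (\<lambda>k. if k < n then v (\<sigma> k) else \<zero>\<^bsub>R\<^esub>)"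

definition untr :: "'a ring \<Rightarrow> (nat \<Rightarrow> 'c) \<Rightarrow> nat \<Rightarrow> 'c set \<Rightarrow> (nat \<Rightarrow> 'a) \<Rightarrow> ('c \<Rightarrow> 'a)" where
  "untr R \<sigma> n B w = (\<lambda>b. if b \<in> B then w (inv_into {..<n} \<sigma> b) else \<zero>\<^bsub>R\<^esub>)"

lemma tr_carrier:
  assumes "bij_betw \<sigma> {..<n} B" "v \<in> carrier (free_on R B)"
  shows "tr R \<sigma> n v \<in> carrier (free_on R {..<n})"
proof -
  have "{k. tr R \<sigma> n v k \<noteq> \<zero>\<^bsub>R\<^esub>} \<subseteq> {..<n}" unfolding tr_def by auto
  then show ?thesis using assms unfolding free_on_carrier tr_def bij_betw_def
    by (auto intro: finite_subset)
qed

lemma untr_carrier: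
  assumes "bij_betw \<sigma> {..<n} B" "finite B" "w \<in> carrier (free_on R {..<n})"
  shows "untr R \<sigma> n B w \<in> carrier (free_on R B)"
proof -
  have "{k. untr R \<sigma> n B w k \<noteq> \<zero>\<^bsub>R\<^esub>} \<subseteq> B" unfolding untr_def by auto
  moreover have "\<And>b. b \<in> B \<Longrightarrow> inv_into {..<n} \<sigma> b < n"
    using bij_betw_inv_into[OF assms(1)] unfolding bij_betw_def by auto
  ultimately show ?thesis using assms unfolding free_on_carrier untr_def
    by (auto intro: finite_subset)
qed

lemma untr_tr:
  assumes "bij_betw \<sigma> {..<n} B" "v \<in> carrier (free_on R B)"
  shows "untr R \<sigma> n B (tr R \<sigma> n v) = v"
proof
  fix b
  show "untr R \<sigma> n B (tr R \<sigma> n v) b = v b"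
  proof (cases "b \<in> B")
    case True
    have "inv_into {..<n} \<sigma> b < n" using bij_betw_inv_into[OF assms(1)] True unfolding bij_betw_def by auto
    then show ?thesis using True bij_betw_inv_into_right[OF assms(1) True] unfolding untr_def tr_def by simp
  next
    case False
    then show ?thesis using assms(2) unfolding untr_def free_on_carrier by simp
  qed
qed

lemma tr_untr:
  assumes "bij_betw \<sigma> {..<n} B" "w \<in> carrier (free_on R {..<n})"
  shows "tr R \<sigma> n (untr R \<sigma> n B w) = w"
proof
  fix k
  show "tr R \<sigma> n (untr R \<sigma> n B w) k = w k"
  proof (cases "k < n")
    case True
    have "\<sigma> k \<in> B" using assms(1) True unfolding bij_betw_def by auto
    then show ?thesis using True bij_betw_inv_into_left[OF assms(1)] unfolding untr_def tr_def by simp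
  next
    case False
    then show ?thesis using assms(2) unfolding tr_def free_on_carrier by simp
  qed
qed

lemma tr_lin:
  assumes "ring R" "bij_betw \<sigma> {..<n} B"
  shows "lin_map R (free_on R B) (free_on R {..<n}) (tr R \<sigma> n)"
  unfolding lin_map_def
proof (intro conjI ballI)
  show "tr R \<sigma> n \<in> carrier (free_on R B) \<rightarrow> carrier (free_on R {..<n})" using tr_carrier[OF assms(2)] by auto
next
  fix x y assume "x \<in> carrier (free_on R B)" "y \<in> carrier (free_on R B)"
  then show "tr R \<sigma> n (x \<oplus>\<^bsub>free_on R B\<^esub> y) = tr R \<sigma> n x \<oplus>\<^bsub>free_on R {..<n}\<^esub> tr R \<sigma> n y"
    unfolding tr_def free_on_add using assms(1) by (auto simp: ring.ring_simprules)
next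
  fix r x assume "r \<in> carrier R" "x \<in> carrier (free_on R B)"
  then show "tr R \<sigma> n (r \<odot>\<^bsub>free_on R B\<^esub> x) = r \<odot>\<^bsub>free_on R {..<n}\<^esub> tr R \<sigma> n x"
    unfolding tr_def free_on_smult using assms(1) by (auto simp: ring.ring_simprules)
qed

lemma untr_lin:
  assumes "ring R" "bij_betw \<sigma> {..<n} B" "finite B"
  shows "lin_map R (free_on R {..<n}) (free_on R B) (untr R \<sigma> n B)"
  unfolding lin_map_def
proof (intro conjI ballI)
  show "untr R \<sigma> n B \<in> carrier (free_on R {..<n}) \<rightarrow> carrier (free_on R B)" using untr_carrier[OF assms(2,3)] by auto
next
  fix x y assume "x \<in> carrier (free_on R {..<n})" "y \<in> carrier (free_on R {..<n})"
  then show "untr R \<sigma> n B (x \<oplus>\<^bsub>free_on R {..<n}\<^esub> y) = untr R \<sigma> n B x \<oplus>\<^bsub>free_on R B\<^esub> untr R \<sigma> n B y"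
    unfolding untr_def free_on_add using assms(1) by (auto simp: ring.ring_simprules)
next
  fix r x assume "r \<in> carrier R" "x \<in> carrier (free_on R {..<n})"
  then show "untr R \<sigma> n B (r \<odot>\<^bsub>free_on R {..<n}\<^esub> x) = r \<odot>\<^bsub>free_on R B\<^esub> untr R \<sigma> n B x"
    unfolding untr_def free_on_smult using assms(1) by (auto simp: ring.ring_simprules)
qed

lemma tr_mc: "local_ring R \<Longrightarrow> mc R v \<Longrightarrow> mc R (tr R \<sigma> n v)"
proof -
  assume L: "local_ring R" and m: "mc R v"
  have "\<zero>\<^bsub>R\<^esub> \<in> max_ideal R" using local_mI[OF L] by (simp add: additive_subgroup.zero_closed ideal.axioms(1))
  then show ?thesis using m unfolding mc_def tr_def by auto
qed

lemma tr_zero: "tr R \<sigma> n (\<zero>\<^bsub>free_on R B\<^esub>) = \<zero>\<^bsub>free_on R {..<n}\<^esub>"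
  unfolding tr_def free_on_zero by auto

lemma conj_exact:
  assumes SX: "\<forall>x\<in>X'. S x \<in> X" and TX: "\<forall>x\<in>X. T x \<in> X'" and TSX: "\<forall>x\<in>X'. T (S x) = x"
    and STX: "\<forall>x\<in>X. S (T x) = x"
    and SZ: "\<forall>z\<in>Z'. SZ z \<in> Z" and TZ: "\<forall>z\<in>Z. TZ z \<in> Z'" and STZ: "\<forall>z\<in>Z. SZ (TZ z) = z"
    and SY: "\<forall>y\<in>Y. SY (TY y) = y" and TY0: "TY yzz = yzz'"
    and fY: "\<forall>x\<in>X. f x \<in> Y" and yzz: "yzz \<in> Y"
    and ker: "{x\<in>X. f x = yzz} = g ` Z"
  shows "{x\<in>X'. TY (f (S x)) = yzz'} = (\<lambda>z. T (g (SZ z))) ` Z'"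
proof
  show "{x\<in>X'. TY (f (S x)) = yzz'} \<subseteq> (\<lambda>z. T (g (SZ z))) ` Z'"
  proof
    fix x assume x: "x \<in> {x\<in>X'. TY (f (S x)) = yzz'}"
    then have xX: "x \<in> X'" and e: "TY (f (S x)) = yzz'" by auto
    have "f (S x) = SY (TY (f (S x)))" using SY fY SX xX by auto
    also have "\<dots> = SY (TY yzz)" using e TY0 by simp
    also have "\<dots> = yzz" using SY yzz by auto
    finally have "S x \<in> {x\<in>X. f x = yzz}" using SX xX by auto
    then obtain z where z: "z \<in> Z" "S x = g z" using ker by auto
    have "x = T (g z)" using TSX xX z by metis
    also have "\<dots> = T (g (SZ (TZ z)))" using STZ z by auto
    finally show "x \<in> (\<lambda>z. T (g (SZ z))) ` Z'" using TZ z by auto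
  qed
next
  show "(\<lambda>z. T (g (SZ z))) ` Z' \<subseteq> {x\<in>X'. TY (f (S x)) = yzz'}"
  proof
    fix x assume "x \<in> (\<lambda>z. T (g (SZ z))) ` Z'"
    then obtain z where z: "z \<in> Z'" "x = T (g (SZ z))" by auto
    have "g (SZ z) \<in> {x\<in>X. f x = yzz}" using ker SZ z by auto
    then have gX: "g (SZ z) \<in> X" and gf: "f (g (SZ z)) = yzz" by auto
    have Sx: "S x = g (SZ z)" using STX gX z by auto
    have "x \<in> X'" using TX gX z by auto
    then show "x \<in> {x\<in>X'. TY (f (S x)) = yzz'}" using Sx gf TY0 by simp
  qed
qed



lemma transport:
  fixes R (structure)
  assumes L: "local_ring R" and res: "is_resolution R N (\<lambda>i. free_on R (B i)) d e"
    and mn: "minimal_complex R (\<lambda>i. free_on R (B i)) d" and fin: "\<And>i. finite (B i)"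
  shows "\<exists>d' e'. min_free_res R N (\<lambda>i. card (B i)) d' e'"
proof -
  interpret cring R using L by (simp add: local_ring_def)
  have "\<forall>i. \<exists>h. bij_betw h {..<card (B i)} (B i)"
    using ex_bij_betw_nat_finite[OF fin] by (simp add: atLeast0LessThan)
  then obtain \<sigma> where sg: "\<And>i. bij_betw (\<sigma> i) {..<card (B i)} (B i)" by metis
  define T where "T i = tr R (\<sigma> i) (card (B i))" for i
  define S where "S i = untr R (\<sigma> i) (card (B i)) (B i)" for i
  define d' where "d' j = (\<lambda>w. T (j - 1) (d j (S j w)))" for j
  define e' where "e' = (\<lambda>w. e (S 0 w))"
  have Nm: "module R N" using res unfolding is_resolution_def by simp
  have dl: "\<And>i. lin_map R (free_on R (B (Suc i))) (free_on R (B i)) (d (Suc i))"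
    using res unfolding is_resolution_def by simp
  have el: "lin_map R (free_on R (B 0)) N e" and es: "e ` carrier (free_on R (B 0)) = carrier N"
    using res unfolding is_resolution_def by auto
  have k0: "lin_ker (free_on R (B 0)) N e = d 1 ` carrier (free_on R (B 1))"
    using res unfolding is_resolution_def by (elim conjE)
  have kall: "\<forall>i\<ge>1. lin_ker (free_on R (B i)) (free_on R (B (i - 1))) (d i) = d (Suc i) ` carrier (free_on R (B (Suc i)))"
    using res unfolding is_resolution_def by (elim conjE)
  have Tl: "\<And>i. lin_map R (free_on R (B i)) (free_on R {..<card (B i)}) (T i)"
    unfolding T_def by (rule tr_lin[OF ring_axioms sg])
  have Sl: "\<And>i. lin_map R (free_on R {..<card (B i)}) (free_on R (B i)) (S i)"
    unfolding S_def by (rule untr_lin[OF ring_axioms sg fin])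
  have TS: "\<And>i w. w \<in> carrier (free_on R {..<card (B i)}) \<Longrightarrow> T i (S i w) = w"
    unfolding T_def S_def by (rule tr_untr[OF sg])
  have ST: "\<And>i v. v \<in> carrier (free_on R (B i)) \<Longrightarrow> S i (T i v) = v"
    unfolding T_def S_def by (rule untr_tr[OF sg])
  have Tc: "\<And>i v. v \<in> carrier (free_on R (B i)) \<Longrightarrow> T i v \<in> carrier (free_on R {..<card (B i)})"
    using lin_map_closed[OF Tl] .
  have Sc: "\<And>i v. v \<in> carrier (free_on R {..<card (B i)}) \<Longrightarrow> S i v \<in> carrier (free_on R (B i))"
    using lin_map_closed[OF Sl] .
  have T0: "\<And>i. T i \<zero>\<^bsub>free_on R (B i)\<^esub> = \<zero>\<^bsub>free_on R {..<card (B i)}\<^esub>"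
    unfolding T_def by (rule tr_zero)
  have d'l: "\<And>i. lin_map R (free_on R {..<card (B (Suc i))}) (free_on R {..<card (B i)}) (d' (Suc i))"
    unfolding d'_def by (simp add: lin_map_comp[OF lin_map_comp[OF Sl dl] Tl])
  have e'l: "lin_map R (free_on R {..<card (B 0)}) N e'"
    unfolding e'_def by (rule lin_map_comp[OF Sl el])
  have e's: "e' ` carrier (free_on R {..<card (B 0)}) = carrier N"
  proof -
    have "S 0 ` carrier (free_on R {..<card (B 0)}) = carrier (free_on R (B 0))"
    proof
      show "S 0 ` carrier (free_on R {..<card (B 0)}) \<subseteq> carrier (free_on R (B 0))" using Sc by auto
      show "carrier (free_on R (B 0)) \<subseteq> S 0 ` carrier (free_on R {..<card (B 0)})"
      proof
        fix v assume v: "v \<in> carrier (free_on R (B 0))"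
        then have "v = S 0 (T 0 v)" using ST by simp
        then show "v \<in> S 0 ` carrier (free_on R {..<card (B 0)})" using Tc[OF v] by blast
      qed
    qed
    then show ?thesis unfolding e'_def using es by (metis image_image)
  qed
  have k0': "lin_ker (free_on R {..<card (B 0)}) N e' = d' 1 ` carrier (free_on R {..<card (B 1)})"
  proof -
    have ker0: "{x \<in> carrier (free_on R (B 0)). e x = \<zero>\<^bsub>N\<^esub>} = d 1 ` carrier (free_on R (B 1))"
      using k0 unfolding lin_ker_def .
    have z0: "\<zero>\<^bsub>N\<^esub> \<in> carrier N"
    proof -
      interpret N: module R N by (rule Nm)
      show ?thesis by simp
    qed
    have "{x \<in> carrier (free_on R {..<card (B 0)}). e (S 0 x) = \<zero>\<^bsub>N\<^esub>}
        = (\<lambda>z. T 0 (d 1 (S 1 z))) ` carrier (free_on R {..<card (B 1)})"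
      by (rule conj_exact[where X = "carrier (free_on R (B 0))" and Y = "carrier N" and SY = "\<lambda>y. y"
          and TY = "\<lambda>y. y" and f = e and g = "d 1" and yzz = "\<zero>\<^bsub>N\<^esub>" and yzz' = "\<zero>\<^bsub>N\<^esub>"
          and T = "T 0" and S = "S 0" and SZ = "S 1"
          and Z = "carrier (free_on R (B 1))" and TZ = "T 1" and X' = "carrier (free_on R {..<card (B 0)})" and Z' = "carrier (free_on R {..<card (B 1)})",
          OF _ _ _ _ _ _ _ _ _ _ z0 ker0])
        (auto simp: Sc Tc TS ST lin_map_closed[OF el])
    then show ?thesis unfolding lin_ker_def e'_def d'_def by simp
  qed
  have kall': "\<forall>i\<ge>1. lin_ker (free_on R {..<card (B i)}) (free_on R {..<card (B (i - 1))}) (d' i)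
      = d' (Suc i) ` carrier (free_on R {..<card (B (Suc i))})"
  proof (intro allI impI)
    fix i :: nat assume "i \<ge> 1"
    then obtain k where i: "i = Suc k" by (metis Suc_le_D One_nat_def)
    have kk: "{x \<in> carrier (free_on R (B (Suc k))). d (Suc k) x = \<zero>\<^bsub>free_on R (B k)\<^esub>} = d (Suc (Suc k)) ` carrier (free_on R (B (Suc (Suc k))))"
      using spec[OF kall, of "Suc k"] unfolding lin_ker_def by simp
    have z1: "\<zero>\<^bsub>free_on R (B k)\<^esub> \<in> carrier (free_on R (B k))"
    proof -
      interpret Fk: module R "free_on R (B k)" by (rule free_on_module[OF cring_axioms])
      show ?thesis by simp
    qed
    have "{x \<in> carrier (free_on R {..<card (B (Suc k))}). T k (d (Suc k) (S (Suc k) x)) = \<zero>\<^bsub>free_on R {..<card (B k)}\<^esub>}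
        = (\<lambda>z. T (Suc k) (d (Suc (Suc k)) (S (Suc (Suc k)) z))) ` carrier (free_on R {..<card (B (Suc (Suc k)))})"
      by (rule conj_exact[where X = "carrier (free_on R (B (Suc k)))" and Y = "carrier (free_on R (B k))" and SY = "S k"
          and TY = "T k" and f = "d (Suc k)" and g = "d (Suc (Suc k))" and T = "T (Suc k)" and S = "S (Suc k)"
          and SZ = "S (Suc (Suc k))" and yzz' = "\<zero>\<^bsub>free_on R {..<card (B k)}\<^esub>"
          and Z = "carrier (free_on R (B (Suc (Suc k))))" and TZ = "T (Suc (Suc k))" and yzz = "\<zero>\<^bsub>free_on R (B k)\<^esub>",
          OF _ _ _ _ _ _ _ _ T0 _ z1 kk])
        (auto simp: Sc Tc TS ST lin_map_closed[OF dl])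
    then show "lin_ker (free_on R {..<card (B i)}) (free_on R {..<card (B (i - 1))}) (d' i)
      = d' (Suc i) ` carrier (free_on R {..<card (B (Suc i))})"
      unfolding lin_ker_def d'_def i by simp
  qed
  have Fm: "\<forall>i. module R (free_on R {..<card (B i)})"
    using free_on_module[OF cring_axioms] by blast
  have isr: "is_resolution R N (\<lambda>i. free_on R {..<card (B i)}) d' e'"
    unfolding is_resolution_def
    using Nm Fm d'l e'l e's k0' kall' by simp
  have mn': "minimal_complex R (\<lambda>i. free_on R {..<card (B i)}) d'"
    unfolding minimal_complex_def
  proof (intro allI subsetI)
    fix i y assume "y \<in> d' (Suc i) ` carrier (free_on R {..<card (B (Suc i))})"
    then obtain w where w: "w \<in> carrier (free_on R {..<card (B (Suc i))})" "y = T i (d (Suc i) (S (Suc i) w))"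
      unfolding d'_def by auto
    let ?x = "d (Suc i) (S (Suc i) w)"
    have xs: "?x \<in> d (Suc i) ` carrier (free_on R (B (Suc i)))" using Sc[OF w(1)] by simp
    have "?x \<in> span R (free_on R (B i)) {r \<odot>\<^bsub>free_on R (B i)\<^esub> y | r y. r \<in> max_ideal R \<and> y \<in> carrier (free_on R (B i))}"
      by (rule subsetD[OF mn[unfolded minimal_complex_def, rule_format] xs])
    then have xm: "mc R ?x" and xc: "?x \<in> carrier (free_on R (B i))" using span_sub_mc[OF L] by auto
    have "mc R y" unfolding w(2) T_def by (rule tr_mc[OF L xm])
    moreover have "y \<in> carrier (free_on R {..<card (B i)})" unfolding w(2) by (rule Tc[OF xc])
    ultimately show "y \<in> span R (free_on R {..<card (B i)}) {r \<odot>\<^bsub>free_on R {..<card (B i)}\<^esub> y | r y. r \<in> max_ideal R \<and> y \<in> carrier (free_on R {..<card (B i)})}"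
      by (intro mc_in_span[OF L]) auto
  qed
  show ?thesis unfolding min_free_res_def using isr mn' by blast
qed



lemma SB_finite: "finite (SB n m j t)"
proof -
  have "SB n m j t \<subseteq> multisets_of_size {..<n} (j - t) \<times> Pow {..<m}"
    unfolding SB_def multisets_of_size_def by auto
  moreover have "finite (multisets_of_size {..<n} (j - t) \<times> Pow {..<m})" by auto
  ultimately show ?thesis by (rule finite_subset)
qed

lemma SB_empty: "j < t \<Longrightarrow> SB n m j t = {}"
  unfolding SB_def by auto

lemma card_SB_ge:
  assumes "0 < n" "t \<le> j"
  shows "m choose t \<le> card (SB n m j t)"
proof -
  let ?A = "{E. E \<subseteq> {..<m} \<and> card E = t}"
  let ?f = "\<lambda>E. (replicate_mset (j - t) (0::nat), E)"
  have "card ?A = m choose t" using n_subsets[of "{..<m}" t] by simp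
  moreover have "card ?A \<le> card (SB n m j t)"
  proof (rule card_inj_on_le)
    show "inj_on ?f ?A" by (auto simp: inj_on_def)
    show "?f ` ?A \<subseteq> SB n m j t" using assms unfolding SB_def by (auto split: if_splits)
    show "finite (SB n m j t)" by (rule SB_finite)
  qed
  ultimately show ?thesis by simp
qed

lemma choose_mono_top: "(d::nat) \<le> m \<Longrightarrow> d choose t \<le> m choose t"
proof -
  assume dm: "d \<le> m"
  have "{E. E \<subseteq> {..<d} \<and> card E = t} \<subseteq> {E. E \<subseteq> {..<m} \<and> card E = t}" using dm by auto
  then have "card {E. E \<subseteq> {..<d} \<and> card E = t} \<le> card {E. E \<subseteq> {..<m} \<and> card E = t}"
    by (intro card_mono) auto
  then show ?thesis using n_subsets[of "{..<d}" t] n_subsets[of "{..<m}" t] by simp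
qed

lemma Sd_mc:
  fixes R (structure)
  assumes L: "local_ring R" and phm: "\<forall>i<n. \<forall>s<m. phi i s \<in> max_ideal R"
    and v: "v \<in> carrier (SF R n m j t)"
  shows "mc R (Sd R phi n m j t v)"
  unfolding mc_def
proof
  fix Y
  interpret cring R using L by (simp add: local_ring_def)
  have mI: "ideal (max_ideal R) R" by (rule local_mI[OF L])
  have vv: "\<And>a. v a \<in> carrier R" using free_on_val[OF ring_axioms v[unfolded SF_def]] .
  have ws: "\<And>E s. wsign R E s \<in> carrier R" unfolding wsign_def by auto
  have z: "\<zero> \<in> max_ideal R" using mI by (simp add: additive_subgroup.zero_closed ideal.axioms(1))
  show "Sd R phi n m j t v Y \<in> max_ideal R"
    unfolding Sd_def
  proof (rule ideal_finsum[OF ring_axioms mI SB_finite], rule ballI)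
    fix a assume a: "a \<in> SB n m j t"
    obtain c E where cE: "a = (c, E)" by fastforce
    have E: "E \<subseteq> {..<m}" using a cE unfolding SB_def by auto
    then have fE: "finite E" by (rule finite_subset) simp
    have "(\<Oplus>s\<in>E. \<Oplus>i\<in>{..<n}. if (add_mset i c, E - {s}) = Y then wsign R E s \<otimes> phi i s \<otimes> v (c, E) else \<zero>) \<in> max_ideal R"
    proof (rule ideal_finsum[OF ring_axioms mI fE], rule ballI)
      fix s assume s: "s \<in> E"
      show "(\<Oplus>i\<in>{..<n}. if (add_mset i c, E - {s}) = Y then wsign R E s \<otimes> phi i s \<otimes> v (c, E) else \<zero>) \<in> max_ideal R"
      proof (rule ideal_finsum[OF ring_axioms mI], simp, rule ballI)
        fix i assume i: "i \<in> {..<n}"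
        have p: "phi i s \<in> max_ideal R" using phm i s E by auto
        have "wsign R E s \<otimes> phi i s \<in> max_ideal R" by (rule ideal.I_l_closed[OF mI p ws])
        then have "wsign R E s \<otimes> phi i s \<otimes> v (c, E) \<in> max_ideal R" by (rule ideal.I_r_closed[OF mI _ vv])
        then show "(if (add_mset i c, E - {s}) = Y then wsign R E s \<otimes> phi i s \<otimes> v (c, E) else \<zero>) \<in> max_ideal R"
          using z by simp
      qed
    qed
    then show "(case a of (c, E) \<Rightarrow> \<Oplus>s\<in>E. \<Oplus>i\<in>{..<n}. if (add_mset i c, E - {s}) = Y then wsign R E s \<otimes> phi i s \<otimes> v (c, E) else \<zero>) \<in> max_ideal R"
      unfolding cE by simp
  qed
qed

lemma SF_minimal:
  fixes R (structure)
  assumes L: "local_ring R" and phm: "\<forall>i<n. \<forall>s<m. phi i s \<in> max_ideal R"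
    and res: "is_resolution R S (\<lambda>t. SF R n m j t) (\<lambda>t. Sd R phi n m j t) e"
  shows "minimal_complex R (\<lambda>t. SF R n m j t) (\<lambda>t. Sd R phi n m j t)"
  unfolding minimal_complex_def
proof (intro allI subsetI)
  fix i y assume "y \<in> Sd R phi n m j (Suc i) ` carrier (SF R n m j (Suc i))"
  then obtain v where v: "v \<in> carrier (SF R n m j (Suc i))" "y = Sd R phi n m j (Suc i) v" by auto
  have l: "lin_map R (SF R n m j (Suc i)) (SF R n m j i) (Sd R phi n m j (Suc i))"
    using res unfolding is_resolution_def by simp
  have yc: "y \<in> carrier (free_on R (SB n m j i))" using lin_map_closed[OF l v(1)] v(2) unfolding SF_def by simp
  have ym: "mc R y" using Sd_mc[OF L phm v(1)] v(2) by simp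
  show "y \<in> span R (SF R n m j i) {r \<odot>\<^bsub>SF R n m j i\<^esub> x | r x. r \<in> max_ideal R \<and> x \<in> carrier (SF R n m j i)}"
    unfolding SF_def by (rule mc_in_span[OF L SB_finite yc ym])
qed



lemma phi_in_m:
  fixes R (structure)
  assumes L: "local_ring R"
    and mn: "minimal_complex R (\<lambda>i. free_on R {..<(if i = 0 then n else if i = 1 then m else 0)})
               (\<lambda>i. if i = 1 then mat_map R phi n m else (\<lambda>v k. \<zero>))"
    and phc: "\<forall>i<n. \<forall>s<m. phi i s \<in> carrier R"
  shows "\<forall>i<n. \<forall>s<m. phi i s \<in> max_ideal R"
proof (intro allI impI)
  fix i s assume i: "i < n" and s: "s < m"
  interpret cring R using L by (simp add: local_ring_def)
  have h0: "mat_map R phi n m ` carrier (free_on R {..<m})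
     \<subseteq> span R (free_on R {..<n}) {r \<odot>\<^bsub>free_on R {..<n}\<^esub> y | r y. r \<in> max_ideal R \<and> y \<in> carrier (free_on R {..<n})}"
    using spec[OF mn[unfolded minimal_complex_def], of 0] by simp
  have ds: "delta R s \<in> carrier (free_on R {..<m})" by (rule delta_carrier[OF ring_axioms]) (use s in simp)
  have "mat_map R phi n m (delta R s) \<in> span R (free_on R {..<n}) {r \<odot>\<^bsub>free_on R {..<n}\<^esub> y | r y. r \<in> max_ideal R \<and> y \<in> carrier (free_on R {..<n})}"
    using h0 ds by blast
  then have "mc R (mat_map R phi n m (delta R s))" using span_sub_mc[OF L] by blast
  then have "mat_map R phi n m (delta R s) i \<in> max_ideal R" unfolding mc_def by simp
  moreover have "mat_map R phi n m (delta R s) i = phi i s"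
  proof -
    have "mat_map R phi n m (delta R s) i = (\<Oplus>s'\<in>{..<m}. phi i s' \<otimes> delta R s s')"
      unfolding mat_map_def using i by simp
    also have "\<dots> = (\<Oplus>s'\<in>{..<m}. if s' = s then phi i s' else \<zero>)"
      by (rule finsum_cong') (use phc i in \<open>auto simp: delta_def\<close>)
    also have "\<dots> = phi i s"
      by (rule add.finprod_singleton_swap) (use s phc i in auto)
    finally show ?thesis .
  qed
  ultimately show "phi i s \<in> max_ideal R" by simp
qed

lemma free_on_empty_carrier: "carrier (free_on R {..<0::nat}) = {\<lambda>x. \<zero>\<^bsub>R\<^esub>}"
  by (auto simp: free_on_def fun_eq_iff)

lemma zero_res:
  fixes R (structure)
  assumes cr: "cring R" and res: "is_resolution R M (\<lambda>i. free_on R {..<bM i}) dM eps" and b0: "bM 0 = 0"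
  shows "is_resolution R M (\<lambda>i. free_on R {..<(0::nat)}) (\<lambda>i v k. \<zero>) eps"
proof -
  interpret cring R by fact
  let ?Z = "free_on R {..<(0::nat)}"
  have Mm: "module R M" using res unfolding is_resolution_def by simp
  have el: "lin_map R ?Z M eps" and es: "eps ` carrier ?Z = carrier M"
    using res b0 unfolding is_resolution_def by auto
  have Zm: "module R ?Z" by (rule free_on_module[OF cr])
  have zl: "lin_map R ?Z ?Z (\<lambda>v k. \<zero>)"
    unfolding lin_map_def free_on_empty_carrier by (auto simp: free_on_add free_on_smult)
  have ez: "eps (\<lambda>x. \<zero>) = \<zero>\<^bsub>M\<^esub>"
    using lin_map_zero[OF Zm Mm el] by (simp add: free_on_zero)
  have k0: "lin_ker ?Z M eps = (\<lambda>v k. \<zero>) ` carrier ?Z"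
    unfolding lin_ker_def free_on_empty_carrier using ez by auto
  have kall: "lin_ker ?Z ?Z (\<lambda>v k. \<zero>) = (\<lambda>v k. \<zero>) ` carrier ?Z"
    unfolding lin_ker_def free_on_empty_carrier by (auto simp: free_on_zero)
  show ?thesis unfolding is_resolution_def using Mm Zm zl el es k0 kall by blast
qed



theorem proposition6p5:
  fixes R :: "'a ring" and M :: "('a, 'b) module" and d j :: nat
  assumes "local_ring R"
    and "krull_dim R = enat d"
    and "j \<ge> 2"
    and "module R M"
    and "fin_gen R M"
    and "proj_dim R M = 1"
    and "SW R M j"
    and "betti R M 1 \<ge> d"
  shows "\<forall>t. enat t \<le> proj_dim R (sym_pow R M j) \<longrightarrow> d choose t \<le> betti R (sym_pow R M j) t"
proof -
  have L: "local_ring R" by fact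
  have cr: "cring R" using L by (simp add: local_ring_def)
  from assms(7) obtain n m phi eps eps' where
    mr: "min_free_res R M (\<lambda>i. if i = 0 then n else if i = 1 then m else 0)
        (\<lambda>i. if i = 1 then mat_map R phi n m else (\<lambda>v k. \<zero>\<^bsub>R\<^esub>)) eps"
    and phc: "\<forall>i<n. \<forall>s<m. phi i s \<in> carrier R"
    and sr: "is_resolution R (sym_pow R M j) (\<lambda>t. SF R n m j t) (\<lambda>t. Sd R phi n m j t) eps'"
    unfolding SW_def by blast
  define bM0 where "bM0 = (\<lambda>i::nat. if i = 0 then n else if i = 1 then m else 0)"
  define dM0 where "dM0 = (\<lambda>i::nat. if i = 1 then mat_map R phi n m else (\<lambda>v k. \<zero>\<^bsub>R\<^esub>))"
  have mrs: "is_resolution R M (\<lambda>i. free_on R {..<bM0 i}) dM0 eps"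
    and mrm: "minimal_complex R (\<lambda>i. free_on R {..<bM0 i}) dM0"
    using mr unfolding min_free_res_def bM0_def dM0_def by auto
  have exM: "\<exists>b d e. min_free_res R M b d e" using mr by blast
  define bS where "bS = (SOME b. \<exists>d e. min_free_res R M b d e)"
  have "\<exists>d e. min_free_res R M bS d e" unfolding bS_def by (rule someI_ex[OF exM])
  then obtain d1 e1 where r1: "min_free_res R M bS d1 e1" by blast
  have "card {..<bS 1} \<le> card {..<bM0 1}"
    by (rule betti_le[where BF = "\<lambda>i. {..<bS i}" and BG = "\<lambda>i. {..<bM0 i}", OF L _ _ _ mrs mrm])
       (use r1 in \<open>auto simp: min_free_res_def\<close>)
  then have bm: "betti R M 1 \<le> m" unfolding betti_def bS_def[symmetric] bM0_def by simp
  have npos: "0 < n"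
  proof (rule ccontr)
    assume "\<not> 0 < n"
    then have "bM0 0 = 0" unfolding bM0_def by simp
    then have zr: "is_resolution R M (\<lambda>i. free_on R {..<(0::nat)}) (\<lambda>i v k. \<zero>\<^bsub>R\<^esub>) eps"
      by (rule zero_res[OF cr mrs])
    have "enat 0 \<in> {enat p | p. \<exists>(b :: nat \<Rightarrow> nat) d eps.
      is_resolution R M (\<lambda>i. free_on R {..<b i}) d eps \<and> (\<forall>i>p. b i = 0)}"
      using zr by fastforce
    then have "proj_dim R M \<le> enat 0" unfolding proj_dim_def by (rule Inf_lower)
    then show False using assms(6) by (simp add: one_enat_def)
  qed
  have phm: "\<forall>i<n. \<forall>s<m. phi i s \<in> max_ideal R"
    by (rule phi_in_m[OF L _ phc]) (use mrm in \<open>simp add: bM0_def dM0_def\<close>)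
  have smin: "minimal_complex R (\<lambda>t. SF R n m j t) (\<lambda>t. Sd R phi n m j t)"
    by (rule SF_minimal[OF L phm sr])
  have sr': "is_resolution R (sym_pow R M j) (\<lambda>t. free_on R (SB n m j t)) (\<lambda>t. Sd R phi n m j t) eps'"
    using sr unfolding SF_def .
  have smin': "minimal_complex R (\<lambda>t. free_on R (SB n m j t)) (\<lambda>t. Sd R phi n m j t)"
    using smin unfolding SF_def .
  obtain d' e' where tr: "min_free_res R (sym_pow R M j) (\<lambda>t. card (SB n m j t)) d' e'"
    using transport[OF L sr' smin' SB_finite] by blast
  define bT where "bT = (SOME b. \<exists>d e. min_free_res R (sym_pow R M j) b d e)"
  have exS: "\<exists>b d e. min_free_res R (sym_pow R M j) b d e" using tr by blast
  have "\<exists>d e. min_free_res R (sym_pow R M j) bT d e" unfolding bT_def by (rule someI_ex[OF exS])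
  then obtain d2 e2 where r2: "min_free_res R (sym_pow R M j) bT d2 e2" by blast
  have bT: "card (SB n m j t) \<le> betti R (sym_pow R M j) t" for t
  proof -
    have "card (SB n m j t) \<le> card {..<bT t}"
      by (rule betti_le[where BF = "\<lambda>t. SB n m j t" and BG = "\<lambda>i. {..<bT i}", OF L sr' smin' SB_finite])
         (use r2 in \<open>auto simp: min_free_res_def\<close>)
    then show ?thesis unfolding betti_def bT_def[symmetric] by simp
  qed
  have pdj: "proj_dim R (sym_pow R M j) \<le> enat j"
  proof -
    have "is_resolution R (sym_pow R M j) (\<lambda>i. free_on R {..<card (SB n m j i)}) d' e'"
      using tr unfolding min_free_res_def by simp
    moreover have "\<forall>i>j. card (SB n m j i) = 0" using SB_empty by simp
    ultimately have "\<exists>(b :: nat \<Rightarrow> nat) d eps.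
      is_resolution R (sym_pow R M j) (\<lambda>i. free_on R {..<b i}) d eps \<and> (\<forall>i>j. b i = 0)"
      by (intro exI[of _ "\<lambda>i. card (SB n m j i)"] exI[of _ d'] exI[of _ e']) simp
    then have "enat j \<in> {enat p | p. \<exists>(b :: nat \<Rightarrow> nat) d eps.
      is_resolution R (sym_pow R M j) (\<lambda>i. free_on R {..<b i}) d eps \<and> (\<forall>i>p. b i = 0)}"
      by blast
    then show ?thesis unfolding proj_dim_def by (rule Inf_lower)
  qed
  show ?thesis
  proof (intro allI impI)
    fix t assume "enat t \<le> proj_dim R (sym_pow R M j)"
    then have tj: "t \<le> j" using pdj by (meson enat_ord_simps(1) order_trans)
    have "d \<le> m" using assms(8) bm by simp
    then have "d choose t \<le> m choose t" by (rule choose_mono_top)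
    also have "\<dots> \<le> card (SB n m j t)" by (rule card_SB_ge[OF npos tj])
    also have "\<dots> \<le> betti R (sym_pow R M j) t" by (rule bT)
    finally show "d choose t \<le> betti R (sym_pow R M j) t" .
  qed
qed


end
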